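(* Let $\mathbf H$ be an $N_r\times N_t$ matrix with i.i.d. $\mathcal{CN}(0,1)$ entries. The wideband slope of the MMSE achievable sum rate is $$S_0^{\rm mmse}=\frac{2N_rN_t}{2N_t+N_r-1}.$$
   Context: $I^{\rm mmse}(\mathrm{snr})=\sum_{i=1}^{N_t}E[\log_2(1+\gamma_i)]$ with $\gamma_i=1/\big[(\mathbf I_{N_t}+\frac{\mathrm{snr}}{N_t}\mathbf H^\dagger\mathbf H)^{-1}\big]_{i,i}-1$. The wideband slope of a rate function $I(\mathrm{snr})$ is $S_0=-2(\dot I(0))^2\ln2/\ddot I(0)$, with derivatives with respect to $\mathrm{snr}$ at $0$. *)

theory Defs
  imports "HOL-Probability.Probability"
begin

text \<open>Circularly-symmetric standard complex Gaussian CN(0,1): density (1/pi) exp(-|z|^2)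
  with respect to Lebesgue measure on the complex plane (real and imaginary parts
  independent N(0,1/2), so E|z|^2 = 1).\<close>
definition CN01 :: "complex measure" where
  "CN01 = density lborel (\<lambda>z. ennreal (exp (- (cmod z)\<^sup>2) / pi))"

text \<open>Distribution of an Nr x Nt channel matrix with i.i.d. CN(0,1) entries; the
  matrix is indexed by the finite types 'r (rows, Nr = CARD('r)) and 't (columns,
  Nt = CARD('t)).\<close>
definition channel_dist :: "('r::finite \<times> 't::finite \<Rightarrow> complex) measure" where
  "channel_dist = PiM UNIV (\<lambda>_. CN01)"

definition to_matrix :: "('r::finite \<times> 't::finite \<Rightarrow> complex) \<Rightarrow> complex^'t^'r" where
  "to_matrix f = (\<chi> i j. f (i, j))"

definition adjoint_mat :: "complex^'t^'r \<Rightarrow> complex^'r^'t" where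
  "adjoint_mat H = (\<chi> j i. cnj (H $ i $ j))"

text \<open>Per-stream post-MMSE SINR gamma_i = 1/[(I + snr/Nt H^dagger H)^{-1}]_{ii} - 1
  (the diagonal entry is real for this Hermitian positive definite matrix; we take Re).\<close>
definition mmse_sinr :: "real \<Rightarrow> complex^'t::finite^'r::finite \<Rightarrow> 't \<Rightarrow> real" where
  "mmse_sinr snr H i =
     1 / Re (matrix_inv (mat 1 + (snr / real CARD('t)) *\<^sub>R (adjoint_mat H ** H)) $ i $ i) - 1"

definition I_mmse :: "('r::finite \<times> 't::finite) itself \<Rightarrow> real \<Rightarrow> real" where
  "I_mmse _ snr = (\<Sum>i\<in>(UNIV::'t set).
      integral\<^sup>L (channel_dist :: ('r \<times> 't \<Rightarrow> complex) measure)
        (\<lambda>f. log 2 (1 + mmse_sinr snr (to_matrix f :: complex^'t^'r) i)))"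

end

theory Submission
  imports Defs
begin


definition phi :: "real \<Rightarrow> real" where "phi t = normal_density 0 (1 / sqrt 2) t"

lemma phi_eq: "phi t = exp (- t\<^sup>2) / sqrt pi"
  by (simp add: phi_def normal_density_def power_divide real_sqrt_divide)

lemma phi_nonneg: "0 \<le> phi t" by (simp add: phi_def)

lemma phi_measurable[measurable]: "phi \<in> borel_measurable borel"
  unfolding phi_def[abs_def] by measurable

lemma phi_moment: "integrable lborel (\<lambda>t. phi t * t ^ k)"
  using integrable_normal_moment[of "1 / sqrt 2" 0 k] by (simp add: phi_def)

lemma phi_moment_even: "integral\<^sup>L lborel (\<lambda>t. phi t * t ^ (2 * k)) = fact (2 * k) / (4 ^ k * fact k)"
  using integral_normal_moment_even[of "1 / sqrt 2" 0 k] by (simp add: phi_def power_divide)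

lemma phi_moment_odd: "integral\<^sup>L lborel (\<lambda>t. phi t * t ^ (2 * k + 1)) = 0"
  using integral_normal_moment_odd[of "1 / sqrt 2" 0 k] by (simp add: phi_def)

lemma phi_int1: "integral\<^sup>L lborel phi = 1"
  using phi_moment_even[of 0] by simp

lemma phi_integrable: "integrable lborel phi"
  using phi_moment[of 0] by simp

lemma phi_poly: "integrable lborel (\<lambda>t. phi t * (1 + t\<^sup>2) ^ n)"
proof -
  have eq: "(\<lambda>t. phi t * (1 + t\<^sup>2) ^ n) = (\<lambda>t. \<Sum>k\<le>n. real (n choose k) * (phi t * t ^ (2 * k)))"
  proof
    fix t :: real
    have "(1 + t\<^sup>2) ^ n = (t\<^sup>2 + 1) ^ n" by (simp add: add.commute)
    also have "\<dots> = (\<Sum>k\<le>n. real (n choose k) * (t\<^sup>2) ^ k)"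
      by (simp add: binomial_ring)
    finally show "phi t * (1 + t\<^sup>2) ^ n = (\<Sum>k\<le>n. real (n choose k) * (phi t * t ^ (2 * k)))"
      by (simp add: sum_distrib_left mult.left_commute flip: power_mult)
  qed
  show ?thesis unfolding eq
    using phi_moment by (auto intro!: integrable_sum integrable_mult_right)
qed


abbreviation PB :: "(complex \<Rightarrow> real) measure" where
  "PB \<equiv> PiM (Basis::complex set) (\<lambda>_. lborel)"

lemma kappa_eq: "(\<Sum>b\<in>(Basis::complex set). f b *\<^sub>R b) = Complex (f 1) (f \<i>)"
  by (simp add: Basis_complex_def complex_eq_iff)

lemma kappa_meas[measurable]: "(\<lambda>f. Complex (f 1) (f \<i>)) \<in> measurable PB borel"
proof -
  have "(\<lambda>f. Complex (f 1) (f \<i>)) = (\<lambda>f. complex_of_real (f 1) + \<i> * complex_of_real (f \<i>))"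
    by (auto simp: complex_eq_iff)
  moreover have "(\<lambda>f. complex_of_real (f 1) + \<i> * complex_of_real (f \<i>)) \<in> measurable PB borel"
    by (simp add: Basis_complex_def)
  ultimately show ?thesis by simp
qed

lemma lborel_complex: "(lborel::complex measure) = distr PB borel (\<lambda>f. Complex (f 1) (f \<i>))"
  by (subst lborel_eq) (simp add: kappa_eq)

lemma dens_eq: "exp (- (cmod (Complex a b))\<^sup>2) / pi = phi a * phi b"
proof -
  have "exp (- (cmod (Complex a b))\<^sup>2) = exp (- a\<^sup>2) * exp (- b\<^sup>2)"
    by (simp add: cmod_def exp_add[symmetric])
  moreover have "sqrt pi * sqrt pi = pi" by simp
  ultimately show ?thesis by (simp add: phi_eq)
qed

lemma dens_meas[measurable]: "(\<lambda>z::complex. exp (- (cmod z)\<^sup>2) / pi) \<in> borel_measurable borel"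
  by measurable

lemma CN01_integral:
  fixes g :: "complex \<Rightarrow> 'b::{banach,second_countable_topology}"
  assumes [measurable]: "g \<in> borel_measurable borel"
  shows "integral\<^sup>L CN01 g = integral\<^sup>L PB (\<lambda>f. (phi (f 1) * phi (f \<i>)) *\<^sub>R g (Complex (f 1) (f \<i>)))"
proof -
  have "integral\<^sup>L CN01 g = integral\<^sup>L lborel (\<lambda>z. (exp (- (cmod z)\<^sup>2) / pi) *\<^sub>R g z)"
    unfolding CN01_def by (rule integral_density) auto
  also have "\<dots> = integral\<^sup>L PB (\<lambda>f. (exp (- (cmod (Complex (f 1) (f \<i>)))\<^sup>2) / pi) *\<^sub>R g (Complex (f 1) (f \<i>)))"
    by (subst lborel_complex, subst integral_distr) auto
  finally show ?thesis by (simp add: dens_eq)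
qed

lemma CN01_integrable:
  fixes g :: "complex \<Rightarrow> 'b::{banach,second_countable_topology}"
  assumes [measurable]: "g \<in> borel_measurable borel"
  shows "integrable CN01 g \<longleftrightarrow> integrable PB (\<lambda>f. (phi (f 1) * phi (f \<i>)) *\<^sub>R g (Complex (f 1) (f \<i>)))"
proof -
  have "integrable CN01 g \<longleftrightarrow> integrable lborel (\<lambda>z. (exp (- (cmod z)\<^sup>2) / pi) *\<^sub>R g z)"
    unfolding CN01_def by (rule integrable_density) auto
  also have "\<dots> \<longleftrightarrow> integrable PB (\<lambda>f. (exp (- (cmod (Complex (f 1) (f \<i>)))\<^sup>2) / pi) *\<^sub>R g (Complex (f 1) (f \<i>)))"
    by (subst lborel_complex, subst integrable_distr_eq) auto
  finally show ?thesis by (simp add: dens_eq)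
qed

interpretation PBI: product_sigma_finite "\<lambda>_::complex. lborel::real measure"
  by standard

lemma prod_basis: "(\<Prod>b\<in>(Basis::complex set). (if b = 1 then u else v) (f b)) = u (f 1) * v (f \<i>)"
  by (simp add: Basis_complex_def)

lemma PB_prod:
  fixes u v :: "real \<Rightarrow> 'c::{real_normed_field,banach,second_countable_topology}"
  assumes "integrable lborel u" "integrable lborel v"
  shows "integrable PB (\<lambda>f. u (f 1) * v (f \<i>))"
    and "integral\<^sup>L PB (\<lambda>f. u (f 1) * v (f \<i>)) = integral\<^sup>L lborel u * integral\<^sup>L lborel v"
proof -
  have i: "\<And>b. b \<in> Basis \<Longrightarrow> integrable lborel (if b = 1 then u else v)"
    using assms by auto
  show "integrable PB (\<lambda>f. u (f 1) * v (f \<i>))"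
    using PBI.product_integrable_prod[of Basis "\<lambda>b. if b = 1 then u else v", OF _ i] by (simp add: prod_basis)
  show "integral\<^sup>L PB (\<lambda>f. u (f 1) * v (f \<i>)) = integral\<^sup>L lborel u * integral\<^sup>L lborel v"
    using PBI.product_integral_prod[of Basis "\<lambda>b. if b = 1 then u else v", OF _ i]
    by (simp add: prod_basis) (simp add: Basis_complex_def)
qed


lemma cmod_Complex_sq: "(cmod (Complex a b))\<^sup>2 = a\<^sup>2 + b\<^sup>2"
  by (simp add: cmod_def)

lemma dens_int: "integrable lborel (\<lambda>z::complex. exp (- (cmod z)\<^sup>2) / pi)"
  by (subst lborel_complex, subst integrable_distr_eq)
     (auto simp: dens_eq intro!: PB_prod(1) phi_integrable)

lemma dens_integral: "integral\<^sup>L lborel (\<lambda>z::complex. exp (- (cmod z)\<^sup>2) / pi) = 1"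
  by (subst lborel_complex, subst integral_distr)
     (auto simp: dens_eq PB_prod(2) phi_integrable phi_int1)

lemma prob_CN01: "prob_space CN01"
proof
  have "emeasure CN01 (space CN01) = (\<integral>\<^sup>+ z. ennreal (exp (- (cmod z)\<^sup>2) / pi) \<partial>lborel)"
    unfolding CN01_def by (simp add: emeasure_density)
  also have "\<dots> = ennreal (integral\<^sup>L lborel (\<lambda>z::complex. exp (- (cmod z)\<^sup>2) / pi))"
    by (rule nn_integral_eq_integral) (auto simp: dens_int)
  finally show "emeasure CN01 (space CN01) = 1" using dens_integral by simp
qed

lemma CN01_poly: "integrable CN01 (\<lambda>z. (1 + (cmod z)\<^sup>2) ^ n)"
proof (subst CN01_integrable)
  show "(\<lambda>z. (1 + (cmod z)\<^sup>2) ^ n) \<in> borel_measurable borel" by measurable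
  let ?F = "\<lambda>f::complex \<Rightarrow> real. (phi (f 1) * (1 + (f 1)\<^sup>2) ^ n) * (phi (f \<i>) * (1 + (f \<i>)\<^sup>2) ^ n)"
  have iF: "integrable PB ?F" by (intro PB_prod(1) phi_poly)
  show "integrable PB (\<lambda>f. (phi (f 1) * phi (f \<i>)) *\<^sub>R (1 + (cmod (Complex (f 1) (f \<i>)))\<^sup>2) ^ n)"
  proof (rule Bochner_Integration.integrable_bound[OF iF])
    show "(\<lambda>f. (phi (f 1) * phi (f \<i>)) *\<^sub>R (1 + (cmod (Complex (f 1) (f \<i>)))\<^sup>2) ^ n) \<in> borel_measurable PB"
      by measurable
    show "AE f in PB. norm ((phi (f 1) * phi (f \<i>)) *\<^sub>R (1 + (cmod (Complex (f 1) (f \<i>)))\<^sup>2) ^ n) \<le> norm (?F f)"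
    proof (intro AE_I2)
      fix f :: "complex \<Rightarrow> real"
      define a where "a = f 1"
      define b where "b = f \<i>"
      have le: "1 + a\<^sup>2 + b\<^sup>2 \<le> (1 + a\<^sup>2) * (1 + b\<^sup>2)"
        by (simp add: algebra_simps)
      have le2: "(1 + a\<^sup>2 + b\<^sup>2) ^ n \<le> ((1 + a\<^sup>2) * (1 + b\<^sup>2)) ^ n"
        by (rule power_mono[OF le]) (simp add: add_nonneg_nonneg)
      have "norm ((phi a * phi b) *\<^sub>R (1 + (cmod (Complex a b))\<^sup>2) ^ n) = (phi a * phi b) * (1 + a\<^sup>2 + b\<^sup>2) ^ n"
        by (simp add: cmod_Complex_sq phi_nonneg add.assoc)
      also have "\<dots> \<le> (phi a * phi b) * ((1 + a\<^sup>2) * (1 + b\<^sup>2)) ^ n"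
        by (rule mult_left_mono[OF le2]) (simp add: phi_nonneg)
      also have "\<dots> = norm ((phi a * (1 + a\<^sup>2) ^ n) * (phi b * (1 + b\<^sup>2) ^ n))"
        by (simp add: phi_nonneg power_mult_distrib abs_mult)
      finally show "norm ((phi (f 1) * phi (f \<i>)) *\<^sub>R (1 + (cmod (Complex (f 1) (f \<i>)))\<^sup>2) ^ n) \<le> norm (?F f)"
        by (simp add: a_def b_def)
    qed
  qed
qed

lemma CN01_int_bound:
  fixes g :: "complex \<Rightarrow> 'b::{banach,second_countable_topology}"
  assumes [measurable]: "g \<in> borel_measurable borel" and b: "\<And>z. norm (g z) \<le> C * (1 + (cmod z)\<^sup>2) ^ n"
  shows "integrable CN01 g"
proof (rule Bochner_Integration.integrable_bound[where f="\<lambda>z. C * (1 + (cmod z)\<^sup>2) ^ n"])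
  show "integrable CN01 (\<lambda>z. C * (1 + (cmod z)\<^sup>2) ^ n)" using CN01_poly by simp
  show "g \<in> borel_measurable CN01" by (simp add: CN01_def)
  show "AE x in CN01. norm (g x) \<le> norm (C * (1 + (cmod x)\<^sup>2) ^ n)"
    using b by (auto intro!: AE_I2 order_trans[OF b])
qed

lemma le_1_sq: "0 \<le> (x::real) \<Longrightarrow> x \<le> 1 + x\<^sup>2"
proof (cases "x \<le> 1")
  case True
  assume "0 \<le> x"
  then have "0 \<le> x\<^sup>2" by simp
  then show ?thesis using True by linarith
next
  case False
  then have "x \<le> x * x" by (simp add: mult_le_cancel_left1)
  then show ?thesis by (simp add: power2_eq_square)
qed

lemma cnj_meas[measurable]: "cnj \<in> borel_measurable borel"
  by (rule borel_measurable_continuous_onI) (intro continuous_on_cnj continuous_on_id)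

lemma int_z: "integrable CN01 (\<lambda>z. z)"
  by (rule CN01_int_bound[where C=1 and n=1]) (auto intro: le_1_sq)

lemma int_cnj: "integrable CN01 (\<lambda>z. cnj z)"
  by (rule CN01_int_bound[where C=1 and n=1]) (auto intro: le_1_sq)

lemma int_sq: "integrable CN01 (\<lambda>z. (cmod z)\<^sup>2)"
  by (rule CN01_int_bound[where C=1 and n=1]) auto

lemma int_sq_c: "integrable CN01 (\<lambda>z. complex_of_real ((cmod z)\<^sup>2))"
  by (rule CN01_int_bound[where C=1 and n=1]) (auto simp: norm_power)


lemma phi_m2: "integral\<^sup>L lborel (\<lambda>t. phi t * t\<^sup>2) = 1/2"
  using phi_moment_even[of 1] by (simp add: fact_numeral)
lemma phi_m4: "integral\<^sup>L lborel (\<lambda>t. phi t * t ^ 4) = 3/4"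
  using phi_moment_even[of 2] by (simp add: fact_numeral)
lemma phi_m1: "integral\<^sup>L lborel (\<lambda>t. phi t * t) = 0"
  using phi_moment_odd[of 0] by simp
lemma phi_i2: "integrable lborel (\<lambda>t. phi t * t\<^sup>2)" using phi_moment[of 2] by simp
lemma phi_i4: "integrable lborel (\<lambda>t. phi t * t ^ 4)" using phi_moment[of 4] by simp
lemma phi_i1: "integrable lborel (\<lambda>t. phi t * t)" using phi_moment[of 1] by simp

lemma PBp:
  fixes u v :: "real \<Rightarrow> 'c::{real_normed_field,banach,second_countable_topology}"
  assumes "integrable lborel u" "integrable lborel v" "integral\<^sup>L lborel u = a" "integral\<^sup>L lborel v = b"
  shows "integrable PB (\<lambda>f. u (f 1) * v (f \<i>))" "integral\<^sup>L PB (\<lambda>f. u (f 1) * v (f \<i>)) = a * b"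
  using PB_prod[OF assms(1,2)] assms(3,4) by auto

lemmas p22 = PBp[OF phi_i2 phi_i2 phi_m2 phi_m2]
lemmas p20 = PBp[OF phi_i2 phi_integrable phi_m2 phi_int1]
lemmas p02 = PBp[OF phi_integrable phi_i2 phi_int1 phi_m2]
lemmas p40 = PBp[OF phi_i4 phi_integrable phi_m4 phi_int1]
lemmas p04 = PBp[OF phi_integrable phi_i4 phi_int1 phi_m4]

lemma mom2: "integral\<^sup>L CN01 (\<lambda>z. (cmod z)\<^sup>2) = 1"
proof -
  have "integral\<^sup>L CN01 (\<lambda>z. (cmod z)\<^sup>2) =
     integral\<^sup>L PB (\<lambda>f. (phi (f 1) * (f 1)\<^sup>2) * phi (f \<i>) + phi (f 1) * (phi (f \<i>) * (f \<i>)\<^sup>2))"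
    by (subst CN01_integral) (auto simp: cmod_Complex_sq algebra_simps intro!: Bochner_Integration.integral_cong)
  also have "\<dots> = 1"
    by (subst Bochner_Integration.integral_add) (auto simp: p20 p02)
  finally show ?thesis .
qed

lemma mom4: "integral\<^sup>L CN01 (\<lambda>z. (cmod z) ^ 4) = 2"
proof -
  have e: "\<And>z. cmod z ^ 4 = ((cmod z)\<^sup>2)\<^sup>2" by simp
  have "integral\<^sup>L CN01 (\<lambda>z. (cmod z) ^ 4) =
     integral\<^sup>L PB (\<lambda>f. (phi (f 1) * phi (f \<i>)) *\<^sub>R cmod (Complex (f 1) (f \<i>)) ^ 4)"
    by (subst CN01_integral) auto
  also have "\<dots> = integral\<^sup>L PB (\<lambda>f. ((phi (f 1) * (f 1) ^ 4) * phi (f \<i>) + phi (f 1) * (phi (f \<i>) * (f \<i>) ^ 4))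
         + 2 * ((phi (f 1) * (f 1)\<^sup>2) * (phi (f \<i>) * (f \<i>)\<^sup>2)))"
    unfolding e cmod_Complex_sq
    by (rule Bochner_Integration.integral_cong) (auto simp: power2_eq_square algebra_simps
            power4_eq_xxxx)
  also have "\<dots> = 2"
  proof -
    let ?a = "\<lambda>f::complex\<Rightarrow>real. (phi (f 1) * (f 1) ^ 4) * phi (f \<i>)"
    let ?b = "\<lambda>f::complex\<Rightarrow>real. phi (f 1) * (phi (f \<i>) * (f \<i>) ^ 4)"
    let ?c = "\<lambda>f::complex\<Rightarrow>real. (phi (f 1) * (f 1)\<^sup>2) * (phi (f \<i>) * (f \<i>)\<^sup>2)"
    have ia: "integrable PB ?a" and ib: "integrable PB ?b" and ic: "integrable PB ?c"
      using p40(1) p04(1) p22(1) by auto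
    have "integral\<^sup>L PB (\<lambda>f. (?a f + ?b f) + 2 * ?c f) = integral\<^sup>L PB (\<lambda>f. ?a f + ?b f) + integral\<^sup>L PB (\<lambda>f. 2 * ?c f)"
      by (rule Bochner_Integration.integral_add) (use ia ib ic in auto)
    also have "\<dots> = integral\<^sup>L PB ?a + integral\<^sup>L PB ?b + 2 * integral\<^sup>L PB ?c"
      by (subst Bochner_Integration.integral_add[OF ia ib]) simp
    also have "\<dots> = 2" using p40(2) p04(2) p22(2) by simp
    finally show ?thesis .
  qed
  finally show ?thesis .
qed

lemma i1c: "integrable lborel (\<lambda>t. complex_of_real (phi t * t))"
  by (rule integrable_bounded_linear[OF bounded_linear_of_real phi_i1])
lemma i0c: "integrable lborel (\<lambda>t. complex_of_real (phi t))"
  by (rule integrable_bounded_linear[OF bounded_linear_of_real phi_integrable])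

lemma ic1: "integral\<^sup>L lborel (\<lambda>t. complex_of_real (phi t * t)) = 0"
  by (simp only: integral_complex_of_real phi_m1) simp
lemma ic0: "integral\<^sup>L lborel (\<lambda>t. complex_of_real (phi t)) = 1"
  by (simp only: integral_complex_of_real phi_int1) simp

lemmas pc10 = PBp[OF i1c i0c ic1 ic0]
lemmas pc01 = PBp[OF i0c i1c ic0 ic1]

lemma mom_z: "integral\<^sup>L CN01 (\<lambda>z. z) = 0"
proof -
  have "integral\<^sup>L CN01 (\<lambda>z. z) = integral\<^sup>L PB (\<lambda>f. (phi (f 1) * phi (f \<i>)) *\<^sub>R Complex (f 1) (f \<i>))"
    by (subst CN01_integral) auto
  also have "\<dots> = integral\<^sup>L PB (\<lambda>f. complex_of_real (phi (f 1) * f 1) * complex_of_real (phi (f \<i>))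
        + \<i> * (complex_of_real (phi (f 1)) * complex_of_real (phi (f \<i>) * f \<i>)))"
    by (rule Bochner_Integration.integral_cong) (auto simp: complex_eq_iff)
  also have "\<dots> = 0"
  proof -
    let ?a = "\<lambda>f::complex\<Rightarrow>real. complex_of_real (phi (f 1) * f 1) * complex_of_real (phi (f \<i>))"
    let ?b = "\<lambda>f::complex\<Rightarrow>real. complex_of_real (phi (f 1)) * complex_of_real (phi (f \<i>) * f \<i>)"
    have ia: "integrable PB ?a" and ib: "integrable PB ?b" using pc10(1) pc01(1) by auto
    have "integral\<^sup>L PB (\<lambda>f. ?a f + \<i> * ?b f) = integral\<^sup>L PB ?a + integral\<^sup>L PB (\<lambda>f. \<i> * ?b f)"
      by (rule Bochner_Integration.integral_add) (use ia ib in auto)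
    also have "\<dots> = 0" using pc10(2) pc01(2) by (simp del: of_real_mult)
    finally show ?thesis .
  qed
  finally show ?thesis .
qed

lemma mom_cnj: "integral\<^sup>L CN01 (\<lambda>z. cnj z) = 0"
  using mom_z by simp


interpretation CNP: prob_space CN01 by (rule prob_CN01)

lemma sets_CN01[measurable_cong]: "sets CN01 = sets borel" by (simp add: CN01_def)

lemma prob_channel: "prob_space (channel_dist :: ('r::finite \<times> 't::finite \<Rightarrow> complex) measure)"
  unfolding channel_dist_def by (rule prob_space_PiM) (rule prob_CN01)

interpretation CHP: product_sigma_finite "\<lambda>_::'i. CN01"
  by standard

lemma space_channel: "space channel_dist = UNIV"
  by (simp add: channel_dist_def space_PiM CN01_def)

lemma channel_EP:
  fixes F :: "'r::finite \<times> 't::finite \<Rightarrow> complex \<Rightarrow> 'c::{real_normed_field,banach,second_countable_topology}"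
  assumes "\<And>e. e \<in> S \<Longrightarrow> integrable CN01 (F e)"
  shows "integrable channel_dist (\<lambda>x. \<Prod>e\<in>S. F e (x e))"
    and "integral\<^sup>L channel_dist (\<lambda>x. \<Prod>e\<in>S. F e (x e)) = (\<Prod>e\<in>S. integral\<^sup>L CN01 (F e))"
proof -
  define G where "G e = (if e \<in> S then F e else (\<lambda>_. 1))" for e
  have iG: "\<And>e. e \<in> UNIV \<Longrightarrow> integrable CN01 (G e)"
    using assms by (auto simp: G_def)
  have eq: "(\<Prod>e\<in>UNIV. G e (x e)) = (\<Prod>e\<in>S. F e (x e))" for x
  proof -
    have "(\<Prod>e\<in>UNIV. G e (x e)) = (\<Prod>e\<in>UNIV. if e \<in> S then F e (x e) else 1)"
      by (intro prod.cong) (auto simp: G_def)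
    also have "\<dots> = (\<Prod>e\<in>S. F e (x e))" by (subst prod.If_cases) auto
    finally show ?thesis .
  qed
  have eq2: "(\<Prod>e\<in>UNIV. integral\<^sup>L CN01 (G e)) = (\<Prod>e\<in>S. integral\<^sup>L CN01 (F e))"
  proof -
    have "(\<Prod>e\<in>UNIV. integral\<^sup>L CN01 (G e)) = (\<Prod>e\<in>UNIV. if e \<in> S then integral\<^sup>L CN01 (F e) else 1)"
      by (intro prod.cong) (auto simp: G_def CNP.prob_space)
    also have "\<dots> = (\<Prod>e\<in>S. integral\<^sup>L CN01 (F e))" by (subst prod.If_cases) auto
    finally show ?thesis .
  qed
  show "integrable channel_dist (\<lambda>x. \<Prod>e\<in>S. F e (x e))"
    using CHP.product_integrable_prod[of UNIV G, OF _ iG] by (simp add: eq channel_dist_def)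
  show "integral\<^sup>L channel_dist (\<lambda>x. \<Prod>e\<in>S. F e (x e)) = (\<Prod>e\<in>S. integral\<^sup>L CN01 (F e))"
    using CHP.product_integral_prod[of UNIV G, OF _ iG] by (simp add: eq eq2 channel_dist_def)
qed

lemma channel_E1:
  fixes g :: "complex \<Rightarrow> 'c::{real_normed_field,banach,second_countable_topology}"
  assumes "integrable CN01 g"
  shows "integrable channel_dist (\<lambda>x::'r::finite \<times> 't::finite \<Rightarrow> complex. g (x e))"
    "integral\<^sup>L channel_dist (\<lambda>x::'r::finite \<times> 't::finite \<Rightarrow> complex. g (x e)) = integral\<^sup>L CN01 g"
  using channel_EP[of "{e}" "\<lambda>_. g"] assms by auto

lemma channel_E2:
  fixes g h :: "complex \<Rightarrow> 'c::{real_normed_field,banach,second_countable_topology}"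
  assumes "integrable CN01 g" "integrable CN01 h" "e \<noteq> e'"
  shows "integrable channel_dist (\<lambda>x::'r::finite \<times> 't::finite \<Rightarrow> complex. g (x e) * h (x e'))"
    "integral\<^sup>L channel_dist (\<lambda>x::'r::finite \<times> 't::finite \<Rightarrow> complex. g (x e) * h (x e')) = integral\<^sup>L CN01 g * integral\<^sup>L CN01 h"
  using channel_EP[of "{e, e'}" "\<lambda>d. if d = e then g else h"] assms by auto

lemma one_plus_sum_le_prod:
  fixes a :: "'a \<Rightarrow> real"
  assumes "finite S" "\<And>e. e \<in> S \<Longrightarrow> 0 \<le> a e"
  shows "1 + (\<Sum>e\<in>S. a e) \<le> (\<Prod>e\<in>S. (1 + a e))"
  using assms
proof (induction S rule: finite_induct)
  case empty then show ?case by simp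
next
  case (insert x F)
  have a: "0 \<le> a x" using insert by auto
  have s: "0 \<le> (\<Sum>e\<in>F. a e)" using insert by (auto intro: sum_nonneg)
  have "1 + (\<Sum>e\<in>insert x F. a e) = 1 + a x + (\<Sum>e\<in>F. a e)" using insert by simp
  also have "\<dots> \<le> (1 + a x) * (1 + (\<Sum>e\<in>F. a e))" using a s by (simp add: algebra_simps)
  also have "\<dots> \<le> (1 + a x) * (\<Prod>e\<in>F. (1 + a e))"
    using insert a by (intro mult_left_mono) auto
  finally show ?case using insert by simp
qed

definition KK :: "('r::finite \<times> 't::finite \<Rightarrow> complex) \<Rightarrow> real" where
  "KK x = 1 + (\<Sum>e\<in>UNIV. (cmod (x e))\<^sup>2)"

lemma KK_ge1: "1 \<le> KK x" by (simp add: KK_def sum_nonneg)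

lemma KK_meas[measurable]: "KK \<in> borel_measurable channel_dist"
  unfolding KK_def[abs_def] channel_dist_def by measurable

lemma KK_int: "integrable channel_dist (\<lambda>x. KK x ^ n)"
proof (rule Bochner_Integration.integrable_bound)
  show "integrable channel_dist (\<lambda>x. \<Prod>e\<in>UNIV. (1 + (cmod (x e))\<^sup>2) ^ n)"
    by (rule channel_EP(1)) (rule CN01_poly)
  show "(\<lambda>x. KK x ^ n) \<in> borel_measurable channel_dist" by measurable
  show "AE x in channel_dist. norm (KK x ^ n) \<le> norm (\<Prod>e\<in>UNIV. (1 + (cmod (x e))\<^sup>2) ^ n)"
  proof (intro AE_I2)
    fix x
    have "KK x ^ n \<le> (\<Prod>e\<in>UNIV. (1 + (cmod (x e))\<^sup>2)) ^ n"
      unfolding KK_def by (intro power_mono one_plus_sum_le_prod) (auto intro!: add_nonneg_nonneg sum_nonneg)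
    also have "\<dots> = (\<Prod>e\<in>UNIV. (1 + (cmod (x e))\<^sup>2) ^ n)" by (simp add: prod_power_distrib)
    finally show "norm (KK x ^ n) \<le> norm (\<Prod>e\<in>UNIV. (1 + (cmod (x e))\<^sup>2) ^ n)"
      using KK_ge1[of x] by (simp add: prod_nonneg KK_def add_nonneg_nonneg sum_nonneg)
  qed
qed


definition Aent :: "('r::finite \<times> 't::finite \<Rightarrow> complex) \<Rightarrow> 't \<Rightarrow> 't \<Rightarrow> complex" where
  "Aent x j k = (\<Sum>r\<in>UNIV. cnj (x (r, j)) * x (r, k))"

lemma cnj_mult_self: "cnj z * z = complex_of_real ((cmod z)\<^sup>2)"
  using complex_norm_square[of z] by (simp add: mult.commute)

lemma pow4_le: "(cmod z) ^ 4 \<le> (1 + (cmod z)\<^sup>2)\<^sup>2"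
proof -
  have "(cmod z) ^ 4 = ((cmod z)\<^sup>2)\<^sup>2" by simp
  also have "\<dots> \<le> (1 + (cmod z)\<^sup>2)\<^sup>2" by (rule power_mono) auto
  finally show ?thesis .
qed

lemma int_sq4: "integrable CN01 (\<lambda>z. (cmod z) ^ 4)"
  by (rule CN01_int_bound[where C=1 and n=2]) (auto simp: pow4_le)

lemma Re_Aent_ii: "Re (Aent x i i) = (\<Sum>r\<in>UNIV. (cmod (x (r, i)))\<^sup>2)"
  by (simp add: Aent_def cnj_mult_self)

lemma EA1: "integral\<^sup>L channel_dist (\<lambda>x::'r::finite \<times> 't::finite \<Rightarrow> complex. Re (Aent x i i)) = real CARD('r)"
proof -
  have "integral\<^sup>L channel_dist (\<lambda>x::'r \<times> 't \<Rightarrow> complex. Re (Aent x i i))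
      = (\<Sum>r\<in>UNIV. integral\<^sup>L channel_dist (\<lambda>x::'r \<times> 't \<Rightarrow> complex. (cmod (x (r, i)))\<^sup>2))"
    unfolding Re_Aent_ii by (rule Bochner_Integration.integral_sum) (rule channel_E1(1)[OF int_sq])
  also have "\<dots> = real CARD('r)" by (simp add: channel_E1(2)[OF int_sq] mom2)
  finally show ?thesis .
qed

lemma pair_sq:
  fixes e e' :: "'r::finite \<times> 't::finite"
  shows "integrable channel_dist (\<lambda>x::'r \<times> 't \<Rightarrow> complex. (cmod (x e))\<^sup>2 * (cmod (x e'))\<^sup>2)"
    "integral\<^sup>L channel_dist (\<lambda>x::'r \<times> 't \<Rightarrow> complex. (cmod (x e))\<^sup>2 * (cmod (x e'))\<^sup>2) = (if e = e' then 2 else 1)"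
proof -
  have "integrable channel_dist (\<lambda>x::'r \<times> 't \<Rightarrow> complex. (cmod (x e))\<^sup>2 * (cmod (x e'))\<^sup>2) \<and>
    integral\<^sup>L channel_dist (\<lambda>x::'r \<times> 't \<Rightarrow> complex. (cmod (x e))\<^sup>2 * (cmod (x e'))\<^sup>2) = (if e = e' then 2 else 1)"
  proof (cases "e = e'")
    case True
    have eq: "(\<lambda>x::'r \<times> 't \<Rightarrow> complex. (cmod (x e))\<^sup>2 * (cmod (x e'))\<^sup>2) = (\<lambda>x. (cmod (x e)) ^ 4)"
      using True by (auto simp: fun_eq_iff power2_eq_square power4_eq_xxxx)
    show ?thesis unfolding eq using channel_E1[OF int_sq4, of e] True by (simp add: mom4)
  next
    case False
    show ?thesis using channel_E2[OF int_sq int_sq False] False by (simp add: mom2)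
  qed
  then show "integrable channel_dist (\<lambda>x::'r \<times> 't \<Rightarrow> complex. (cmod (x e))\<^sup>2 * (cmod (x e'))\<^sup>2)"
    "integral\<^sup>L channel_dist (\<lambda>x::'r \<times> 't \<Rightarrow> complex. (cmod (x e))\<^sup>2 * (cmod (x e'))\<^sup>2) = (if e = e' then 2 else 1)"
    by auto
qed

lemma EA2: "integral\<^sup>L channel_dist (\<lambda>x::'r::finite \<times> 't::finite \<Rightarrow> complex. (Re (Aent x i i))\<^sup>2)
   = real CARD('r) * real CARD('r) + real CARD('r)"
proof -
  have sq: "(Re (Aent x i i))\<^sup>2 = (\<Sum>r\<in>UNIV. \<Sum>r'\<in>UNIV. (cmod (x (r, i)))\<^sup>2 * (cmod (x (r', i)))\<^sup>2)"
    for x :: "'r \<times> 't \<Rightarrow> complex"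
    unfolding Re_Aent_ii power2_eq_square[of "sum _ _"] sum_product ..
  have "integral\<^sup>L channel_dist (\<lambda>x::'r \<times> 't \<Rightarrow> complex. (Re (Aent x i i))\<^sup>2)
     = (\<Sum>r\<in>UNIV. \<Sum>r'\<in>UNIV. integral\<^sup>L channel_dist (\<lambda>x::'r \<times> 't \<Rightarrow> complex. (cmod (x (r, i)))\<^sup>2 * (cmod (x (r', i)))\<^sup>2))"
    unfolding sq
    apply (subst Bochner_Integration.integral_sum)
     apply (rule Bochner_Integration.integrable_sum, rule pair_sq(1))
    apply (rule sum.cong[OF refl])
    apply (rule Bochner_Integration.integral_sum)
    apply (rule pair_sq(1))
    done
  also have "\<dots> = (\<Sum>r\<in>(UNIV::'r set). \<Sum>r'\<in>(UNIV::'r set). (if r = r' then 2 else 1))"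
    by (simp add: pair_sq(2))
  also have "\<dots> = (\<Sum>r\<in>(UNIV::'r set). real CARD('r) + 1)"
  proof (rule sum.cong[OF refl])
    fix r :: 'r
    have "(\<Sum>r'\<in>(UNIV::'r set). (if r = r' then 2 else 1)::real) = (\<Sum>r'\<in>(UNIV::'r set). 1 + (if r = r' then 1 else 0))"
      by (rule sum.cong) auto
    also have "\<dots> = real CARD('r) + 1" by (simp add: sum.distrib)
    finally show "(\<Sum>r'\<in>(UNIV::'r set). (if r = r' then 2 else 1)::real) = real CARD('r) + 1" .
  qed
  also have "\<dots> = real CARD('r) * real CARD('r) + real CARD('r)" by (simp add: algebra_simps)
  finally show ?thesis .
qed

lemma integral_Re':
  fixes f :: "'a \<Rightarrow> complex"
  shows "integrable M f \<Longrightarrow> integral\<^sup>L M (\<lambda>x. Re (f x)) = Re (integral\<^sup>L M f)"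
  by (rule has_bochner_integral_integral_eq) (rule has_bochner_integral_Re[OF has_bochner_integral_integrable])

lemma int_id: "integrable CN01 (\<lambda>z. z)" by (rule int_z)

lemma quad:
  fixes r r' :: "'r::finite" and i k :: "'t::finite"
  assumes ki: "k \<noteq> i"
  shows "integrable channel_dist (\<lambda>x::'r \<times> 't \<Rightarrow> complex. cnj (x (r, i)) * x (r, k) * (x (r', i) * cnj (x (r', k))))"
    "integral\<^sup>L channel_dist (\<lambda>x::'r \<times> 't \<Rightarrow> complex. cnj (x (r, i)) * x (r, k) * (x (r', i) * cnj (x (r', k))))
      = (if r = r' then 1 else 0)"
proof -
  have "integrable channel_dist (\<lambda>x::'r \<times> 't \<Rightarrow> complex. cnj (x (r, i)) * x (r, k) * (x (r', i) * cnj (x (r', k)))) \<and>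
    integral\<^sup>L channel_dist (\<lambda>x::'r \<times> 't \<Rightarrow> complex. cnj (x (r, i)) * x (r, k) * (x (r', i) * cnj (x (r', k))))
      = (if r = r' then 1 else 0)"
  proof (cases "r = r'")
    case True
    have eq: "(\<lambda>x::'r \<times> 't \<Rightarrow> complex. cnj (x (r, i)) * x (r, k) * (x (r', i) * cnj (x (r', k))))
       = (\<lambda>x. (cnj (x (r, i)) * x (r, i)) * (cnj (x (r, k)) * x (r, k)))"
      using True by (auto simp: fun_eq_iff mult_ac)
    have ne: "(r, i) \<noteq> (r, k)" using ki by simp
    have icz: "integrable CN01 (\<lambda>z. cnj z * z)" unfolding cnj_mult_self by (rule int_sq_c)
    have m: "integral\<^sup>L CN01 (\<lambda>z. cnj z * z) = 1"
      unfolding cnj_mult_self by (simp only: integral_complex_of_real mom2) simp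
    show ?thesis unfolding eq using channel_E2[OF icz icz ne] True m by simp
  next
    case False
    define S where "S = {(r, i), (r, k), (r', i), (r', k)}"
    define F where "F e = (if e = (r, i) \<or> e = (r', k) then cnj else (\<lambda>z::complex. z))" for e
    have iF: "\<And>e. e \<in> S \<Longrightarrow> integrable CN01 (F e)"
      by (auto simp: F_def int_cnj int_id)
    have eq: "(\<Prod>e\<in>S. F e (x e)) = cnj (x (r, i)) * x (r, k) * (x (r', i) * cnj (x (r', k)))" for x
      using False ki by (simp add: S_def F_def ac_simps)
    have z: "(\<Prod>e\<in>S. integral\<^sup>L CN01 (F e)) = 0"
    proof (rule prod_zero)
      show "finite S" by (simp add: S_def)
      show "\<exists>e\<in>S. integral\<^sup>L CN01 (F e) = 0"
        by (rule bexI[of _ "(r, i)"]) (auto simp: S_def F_def mom_cnj mom_z)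
    qed
    show ?thesis using channel_EP[of S F, OF iF] False unfolding eq z by simp
  qed
  then show "integrable channel_dist (\<lambda>x::'r \<times> 't \<Rightarrow> complex. cnj (x (r, i)) * x (r, k) * (x (r', i) * cnj (x (r', k))))"
    "integral\<^sup>L channel_dist (\<lambda>x::'r \<times> 't \<Rightarrow> complex. cnj (x (r, i)) * x (r, k) * (x (r', i) * cnj (x (r', k))))
      = (if r = r' then 1 else 0)" by auto
qed

lemma Aent_sq: "complex_of_real ((cmod (Aent x i k))\<^sup>2) =
   (\<Sum>r\<in>UNIV. \<Sum>r'\<in>UNIV. cnj (x (r, i)) * x (r, k) * (x (r', i) * cnj (x (r', k))))"
proof -
  have "complex_of_real ((cmod (Aent x i k))\<^sup>2) = Aent x i k * cnj (Aent x i k)"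
    by (rule complex_norm_square)
  also have "\<dots> = (\<Sum>r\<in>UNIV. \<Sum>r'\<in>UNIV. cnj (x (r, i)) * x (r, k) * (x (r', i) * cnj (x (r', k))))"
    by (simp add: Aent_def sum_product)
  finally show ?thesis .
qed

lemma EA3_off:
  fixes i k :: "'t::finite"
  assumes "k \<noteq> i"
  shows "integrable channel_dist (\<lambda>x::'r::finite \<times> 't \<Rightarrow> complex. (cmod (Aent x i k))\<^sup>2)"
    "integral\<^sup>L channel_dist (\<lambda>x::'r::finite \<times> 't \<Rightarrow> complex. (cmod (Aent x i k))\<^sup>2) = real CARD('r)"
proof -
  have ic: "integrable channel_dist (\<lambda>x::'r \<times> 't \<Rightarrow> complex. complex_of_real ((cmod (Aent x i k))\<^sup>2))"
    unfolding Aent_sq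
    by (intro Bochner_Integration.integrable_sum quad(1)[OF assms])
  have vc: "integral\<^sup>L channel_dist (\<lambda>x::'r \<times> 't \<Rightarrow> complex. complex_of_real ((cmod (Aent x i k))\<^sup>2)) = of_nat CARD('r)"
    unfolding Aent_sq
    apply (subst Bochner_Integration.integral_sum)
     apply (rule Bochner_Integration.integrable_sum, rule quad(1)[OF assms])
    apply (subst Bochner_Integration.integral_sum)
     apply (rule quad(1)[OF assms])
    apply (simp add: quad(2)[OF assms])
    done
  have eq: "(\<lambda>x::'r \<times> 't \<Rightarrow> complex. (cmod (Aent x i k))\<^sup>2) = (\<lambda>x. Re (complex_of_real ((cmod (Aent x i k))\<^sup>2)))"
    by simp
  show "integrable channel_dist (\<lambda>x::'r::finite \<times> 't \<Rightarrow> complex. (cmod (Aent x i k))\<^sup>2)"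
    using integrable_bounded_linear[OF bounded_linear_Re ic] by simp
  show "integral\<^sup>L channel_dist (\<lambda>x::'r::finite \<times> 't \<Rightarrow> complex. (cmod (Aent x i k))\<^sup>2) = real CARD('r)"
    by (subst eq, subst integral_Re'[OF ic], simp only: vc) simp
qed

lemma Aent_ii_real: "(cmod (Aent x i i))\<^sup>2 = (Re (Aent x i i))\<^sup>2"
proof -
  have "Aent x i i = complex_of_real (Re (Aent x i i))"
    by (simp add: Re_Aent_ii Aent_def cnj_mult_self)
  then have "cmod (Aent x i i) = \<bar>Re (Aent x i i)\<bar>" by (metis norm_of_real)
  then show ?thesis by simp
qed

lemma int_Re_sq: "integrable channel_dist (\<lambda>x::'r::finite \<times> 't::finite \<Rightarrow> complex. (Re (Aent x i i))\<^sup>2)"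
proof -
  have sq: "(Re (Aent x i i))\<^sup>2 = (\<Sum>r\<in>UNIV. \<Sum>r'\<in>UNIV. (cmod (x (r, i)))\<^sup>2 * (cmod (x (r', i)))\<^sup>2)"
    for x :: "'r \<times> 't \<Rightarrow> complex"
    unfolding Re_Aent_ii power2_eq_square[of "sum _ _"] sum_product ..
  show ?thesis unfolding sq
    by (rule Bochner_Integration.integrable_sum, rule Bochner_Integration.integrable_sum, rule pair_sq(1))
qed

lemma int_Re_Aii: "integrable channel_dist (\<lambda>x::'r::finite \<times> 't::finite \<Rightarrow> complex. Re (Aent x i i))"
  unfolding Re_Aent_ii by (rule Bochner_Integration.integrable_sum) (rule channel_E1(1)[OF int_sq])

lemma EA3: "integral\<^sup>L channel_dist (\<lambda>x::'r::finite \<times> 't::finite \<Rightarrow> complex. \<Sum>k\<in>UNIV. (cmod (Aent x i k))\<^sup>2)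
   = real CARD('r) * real CARD('r) + real CARD('r) + (real CARD('t) - 1) * real CARD('r)"
proof -
  have split: "(\<Sum>k\<in>UNIV. (cmod (Aent x i k))\<^sup>2) = (Re (Aent x i i))\<^sup>2 + (\<Sum>k\<in>UNIV - {i}. (cmod (Aent x i k))\<^sup>2)"
    for x :: "'r \<times> 't \<Rightarrow> complex"
    by (subst sum.remove[of UNIV i]) (auto simp: Aent_ii_real)
  have io: "integrable channel_dist (\<lambda>x::'r \<times> 't \<Rightarrow> complex. \<Sum>k\<in>UNIV - {i}. (cmod (Aent x i k))\<^sup>2)"
    by (rule Bochner_Integration.integrable_sum) (rule EA3_off(1), simp)
  have "integral\<^sup>L channel_dist (\<lambda>x::'r \<times> 't \<Rightarrow> complex. \<Sum>k\<in>UNIV. (cmod (Aent x i k))\<^sup>2)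
     = integral\<^sup>L channel_dist (\<lambda>x::'r \<times> 't \<Rightarrow> complex. (Re (Aent x i i))\<^sup>2)
       + integral\<^sup>L channel_dist (\<lambda>x::'r \<times> 't \<Rightarrow> complex. \<Sum>k\<in>UNIV - {i}. (cmod (Aent x i k))\<^sup>2)"
    unfolding split by (rule Bochner_Integration.integral_add[OF int_Re_sq io])
  also have "integral\<^sup>L channel_dist (\<lambda>x::'r \<times> 't \<Rightarrow> complex. \<Sum>k\<in>UNIV - {i}. (cmod (Aent x i k))\<^sup>2)
     = (\<Sum>k\<in>UNIV - {i}. real CARD('r))"
    apply (subst Bochner_Integration.integral_sum)
     apply (rule EA3_off(1), simp)
    apply (rule sum.cong[OF refl])
    apply (rule EA3_off(2), simp)
    done
  also have "\<dots> = (real CARD('t) - 1) * real CARD('r)"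
    by (simp add: card_Diff_singleton)
  finally show ?thesis by (simp add: EA2)
qed


lemma deriv_int:
  fixes f f' :: "real \<Rightarrow> 'a \<Rightarrow> real" and w :: "'a \<Rightarrow> real" and S :: "real set"
  assumes cvx: "convex S"
    and der: "\<And>x s. x \<in> space M \<Longrightarrow> s \<in> S \<Longrightarrow> ((\<lambda>t. f t x) has_real_derivative f' s x) (at s within S)"
    and bnd: "\<And>x s. x \<in> space M \<Longrightarrow> s \<in> S \<Longrightarrow> \<bar>f' s x\<bar> \<le> w x"
    and w: "integrable M w"
    and fi: "\<And>s. s \<in> S \<Longrightarrow> integrable M (f s)"
    and f'm: "\<And>s. s \<in> S \<Longrightarrow> f' s \<in> borel_measurable M"
    and s: "s \<in> S"
  shows "((\<lambda>t. integral\<^sup>L M (f t)) has_real_derivative integral\<^sup>L M (f' s)) (at s within S)"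
  unfolding has_field_derivative_iff tendsto_at_iff_sequentially
proof (intro allI impI)
  fix X :: "nat \<Rightarrow> real"
  assume XS: "\<forall>i. X i \<in> S - {s}" and Xl: "X \<longlonglongrightarrow> s"
  define Q where "Q n x = (f (X n) x - f s x) / (X n - s)" for n x
  have eq: "((\<lambda>t. (integral\<^sup>L M (f t) - integral\<^sup>L M (f s)) / (t - s)) \<circ> X) n = integral\<^sup>L M (Q n)" for n
  proof -
    have "X n \<in> S" using XS by auto
    then show ?thesis
      unfolding Q_def comp_def
      by (simp add: Bochner_Integration.integral_diff[OF fi fi[OF s]])
  qed
  have "(\<lambda>n. integral\<^sup>L M (Q n)) \<longlonglongrightarrow> integral\<^sup>L M (f' s)"
  proof (rule integral_dominated_convergence[where w=w])
    show "f' s \<in> borel_measurable M" using f'm s .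
    show "Q n \<in> borel_measurable M" for n
    proof -
      have "X n \<in> S" using XS by auto
      then show ?thesis unfolding Q_def[abs_def]
        using fi[of "X n"] fi[OF s] by (intro borel_measurable_divide borel_measurable_diff) auto
    qed
    show "integrable M w" by (rule w)
    show "AE x in M. (\<lambda>n. Q n x) \<longlonglongrightarrow> f' s x"
    proof (rule AE_I2)
      fix x assume x: "x \<in> space M"
      have "((\<lambda>t. (f t x - f s x) / (t - s)) \<longlongrightarrow> f' s x) (at s within S)"
        using der[OF x s] unfolding has_field_derivative_iff .
      then show "(\<lambda>n. Q n x) \<longlonglongrightarrow> f' s x"
        unfolding tendsto_at_iff_sequentially Q_def comp_def using XS Xl by auto
    qed
    show "AE x in M. norm (Q n x) \<le> w x" for n
    proof (rule AE_I2)
      fix x assume x: "x \<in> space M"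
      have Xn: "X n \<in> S" "X n \<noteq> s" using XS by auto
      have "norm (f (X n) x - f s x) \<le> w x * norm (X n - s)"
        by (rule field_differentiable_bound[of S "\<lambda>t. f t x" "\<lambda>s. f' s x" "w x"])
           (use Xn s cvx der[OF x] bnd[OF x] in auto)
      then show "norm (Q n x) \<le> w x"
        using Xn unfolding Q_def by (simp add: divide_le_eq)
    qed
  qed
  then show "((\<lambda>t. (integral\<^sup>L M (f t) - integral\<^sup>L M (f s)) / (t - s)) \<circ> X) \<longlonglongrightarrow> integral\<^sup>L M (f' s)"
    unfolding eq[abs_def] by simp
qed


definition psd :: "complex^'n::finite^'n \<Rightarrow> bool" where
  "psd A \<longleftrightarrow> (\<forall>v. 0 \<le> Re (\<Sum>j\<in>UNIV. cnj (v$j) * (A *v v)$j))"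

lemma inner_cvec: "(x::complex^'n::finite) \<bullet> y = Re (\<Sum>j\<in>UNIV. cnj (x$j) * y$j)"
  by (simp add: inner_vec_def inner_complex_def Re_sum)

lemma scaleR_Mv: "(c *\<^sub>R A) *v (x::complex^'n::finite) = c *\<^sub>R (A *v x)"
  by (simp add: vec_eq_iff matrix_vector_mult_def scaleR_sum_right)

lemma Mv: "(mat 1 + c *\<^sub>R A) *v (x::complex^'n::finite) = x + c *\<^sub>R (A *v x)"
  by (simp add: matrix_vector_mult_add_rdistrib scaleR_Mv)

lemma norm_axis_c: "norm (axis k (1::complex) :: complex^'n::finite) = 1"
proof -
  have "(\<Sum>i\<in>UNIV. (norm (axis k (1::complex) $ i))\<^sup>2) = (\<Sum>i\<in>(UNIV::'n set). if i = k then 1 else 0)"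
    by (rule sum.cong) (auto simp: axis_def)
  then show ?thesis by (simp add: norm_vec_def L2_set_def)
qed

lemma key_ineq:
  fixes A :: "complex^'n::finite^'n"
  assumes "psd A" "0 \<le> c"
  shows "(norm x)\<^sup>2 \<le> x \<bullet> ((mat 1 + c *\<^sub>R A) *v x)"
proof -
  have "x \<bullet> ((mat 1 + c *\<^sub>R A) *v x) = x \<bullet> x + c * (x \<bullet> (A *v x))"
    by (simp add: Mv inner_add_right)
  moreover have "0 \<le> x \<bullet> (A *v x)" using assms(1) unfolding psd_def inner_cvec by auto
  moreover have "x \<bullet> x = (norm x)\<^sup>2" by (simp add: power2_norm_eq_inner)
  ultimately show ?thesis using assms(2) by (simp add: mult_nonneg_nonneg)
qed

lemma key_norm:
  fixes A :: "complex^'n::finite^'n"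
  assumes "psd A" "0 \<le> c"
  shows "norm x \<le> norm ((mat 1 + c *\<^sub>R A) *v x)"
proof (cases "norm x = 0")
  case True then show ?thesis by simp
next
  case False
  have "(norm x)\<^sup>2 \<le> norm x * norm ((mat 1 + c *\<^sub>R A) *v x)"
    using key_ineq[OF assms, of x] norm_cauchy_schwarz[of x "(mat 1 + c *\<^sub>R A) *v x"] by linarith
  then show ?thesis using False by (simp add: power2_eq_square mult_le_cancel_left)
qed

lemma invertible_M:
  fixes A :: "complex^'n::finite^'n"
  assumes "psd A" "0 \<le> c"
  shows "invertible (mat 1 + c *\<^sub>R A)"
proof -
  have "\<forall>x. (mat 1 + c *\<^sub>R A) *v x = 0 \<longrightarrow> x = 0"
  proof (intro allI impI)
    fix x :: "complex^'n" assume "(mat 1 + c *\<^sub>R A) *v x = 0"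
    then have "norm x \<le> 0" using key_norm[OF assms, of x] by simp
    then show "x = 0" by simp
  qed
  then show ?thesis
    unfolding invertible_left_inverse matrix_left_invertible_ker by blast
qed

lemma inv_props:
  fixes M :: "'a::field^'n::finite^'n"
  assumes "invertible M"
  shows "M ** matrix_inv M = mat 1" "matrix_inv M ** M = mat 1"
proof -
  have "\<exists>M'. M ** M' = mat 1 \<and> M' ** M = mat 1" using assms unfolding invertible_def by blast
  then have "M ** matrix_inv M = mat 1 \<and> matrix_inv M ** M = mat 1"
    unfolding matrix_inv_def by (rule someI_ex)
  then show "M ** matrix_inv M = mat 1" "matrix_inv M ** M = mat 1" by auto
qed

lemma col_entry: "(B *v axis k 1) $ j = (B $ j $ k :: complex)"
  by (simp add: matrix_vector_mult_def axis_def if_distrib cong: if_cong)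

lemma B_bound:
  fixes A :: "complex^'n::finite^'n"
  assumes "psd A" "0 \<le> c"
  shows "cmod (matrix_inv (mat 1 + c *\<^sub>R A) $ j $ k) \<le> 1"
proof -
  let ?M = "mat 1 + c *\<^sub>R A"
  let ?B = "matrix_inv ?M"
  define x where "x = ?B *v axis k 1"
  have "?M *v x = axis k 1"
    unfolding x_def matrix_vector_mul_assoc inv_props(1)[OF invertible_M[OF assms]] by simp
  then have "norm x \<le> 1" using key_norm[OF assms, of x] by (simp add: norm_axis_c)
  moreover have "cmod (?B $ j $ k) \<le> norm x"
    unfolding x_def col_entry[symmetric] by (rule Finite_Cartesian_Product.norm_nth_le)
  ultimately show ?thesis by simp
qed

lemma norm_vec_le_sum: "norm (v::complex^'n::finite) \<le> (\<Sum>j\<in>UNIV. cmod (v$j))"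
  by (simp add: norm_vec_def L2_set_le_sum)

lemma norm_Mv_le:
  fixes M :: "complex^'n::finite^'n"
  shows "norm (M *v x) \<le> (\<Sum>j\<in>UNIV. \<Sum>k\<in>UNIV. cmod (M$j$k)) * norm x"
proof -
  have "norm (M *v x) \<le> (\<Sum>j\<in>UNIV. cmod ((M *v x)$j))" by (rule norm_vec_le_sum)
  also have "\<dots> \<le> (\<Sum>j\<in>UNIV. \<Sum>k\<in>UNIV. cmod (M$j$k) * norm x)"
  proof (rule sum_mono)
    fix j
    have "cmod ((M *v x)$j) = cmod (\<Sum>k\<in>UNIV. M$j$k * x$k)" by (simp add: matrix_vector_mult_def)
    also have "\<dots> \<le> (\<Sum>k\<in>UNIV. cmod (M$j$k * x$k))" by (rule norm_sum)
    also have "\<dots> \<le> (\<Sum>k\<in>UNIV. cmod (M$j$k) * norm x)"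
      by (rule sum_mono) (simp add: norm_mult, intro mult_left_mono Finite_Cartesian_Product.norm_nth_le norm_ge_zero)
    finally show "cmod ((M *v x)$j) \<le> (\<Sum>k\<in>UNIV. cmod (M$j$k) * norm x)" .
  qed
  finally show ?thesis by (simp add: sum_distrib_right)
qed

lemma q_lower:
  fixes A :: "complex^'n::finite^'n"
  assumes "psd A" "0 \<le> c"
  defines "L \<equiv> (\<Sum>j\<in>UNIV. \<Sum>k\<in>UNIV. cmod ((mat 1 + c *\<^sub>R A)$j$k))"
  shows "0 < L" "1 / L\<^sup>2 \<le> Re (matrix_inv (mat 1 + c *\<^sub>R A) $ i $ i)"
proof -
  let ?M = "mat 1 + c *\<^sub>R A"
  let ?B = "matrix_inv ?M"
  define x where "x = ?B *v axis i 1"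
  have Mx: "?M *v x = axis i 1"
    unfolding x_def matrix_vector_mul_assoc inv_props(1)[OF invertible_M[OF assms(1,2)]] by simp
  have "1 \<le> L * norm x" using norm_Mv_le[of ?M x] unfolding Mx L_def by (simp add: norm_axis_c)
  moreover have L0: "0 \<le> L" unfolding L_def by (intro sum_nonneg norm_ge_zero)
  ultimately show Lp: "0 < L" by (metis mult_eq_0_iff order.not_eq_order_implies_strict not_one_le_zero)
  have "x \<bullet> axis i 1 = Re (x $ i)"
    unfolding inner_cvec by (simp add: axis_def if_distrib cong: if_cong)
  also have "x $ i = ?B $ i $ i" unfolding x_def by (rule col_entry)
  finally have "x \<bullet> (?M *v x) = Re (?B $ i $ i)" unfolding Mx .
  then have nq: "(norm x)\<^sup>2 \<le> Re (?B $ i $ i)" using key_ineq[OF assms(1,2), of x] by simp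
  have "1 / L \<le> norm x" using \<open>1 \<le> L * norm x\<close> Lp by (simp add: divide_le_eq mult.commute)
  then have "(1 / L)\<^sup>2 \<le> (norm x)\<^sup>2" by (rule power_mono) (use Lp in simp)
  then show "1 / L\<^sup>2 \<le> Re (?B $ i $ i)" using nq by (simp add: power_divide)
qed


lemma mm_diff_left: "(A::'a::comm_ring_1^'n::finite^'m::finite) ** (B - C) = A ** B - A ** C"
  by (simp add: matrix_matrix_mult_def vec_eq_iff sum_subtractf algebra_simps)
lemma mm_diff_right: "((A::'a::comm_ring_1^'n::finite^'m::finite) - B) ** C = A ** C - B ** C"
  by (simp add: matrix_matrix_mult_def vec_eq_iff sum_subtractf algebra_simps)
lemma mm_add_right: "((A::'a::comm_ring_1^'n::finite^'m::finite) + B) ** C = A ** C + B ** C"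
  by (simp add: matrix_matrix_mult_def vec_eq_iff sum.distrib algebra_simps)
lemma mm_neg_left: "(- (A::'a::comm_ring_1^'n::finite^'m::finite)) ** B = - (A ** B)"
  by (simp add: matrix_matrix_mult_def vec_eq_iff sum_negf)
lemma mm_neg_right: "(A::'a::comm_ring_1^'n::finite^'m::finite) ** (- B) = - (A ** B)"
  by (simp add: matrix_matrix_mult_def vec_eq_iff sum_negf)
lemma mm_entry: "(A ** B) $ i $ j = (\<Sum>k\<in>UNIV. A $ i $ k * B $ k $ j)"
  by (simp add: matrix_matrix_mult_def)

abbreviation Bm :: "complex^'n::finite^'n \<Rightarrow> real \<Rightarrow> complex^'n^'n" where
  "Bm A c \<equiv> matrix_inv (mat 1 + c *\<^sub>R A)"

lemma B_diff:
  fixes A1 A2 :: "complex^'n::finite^'n"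
  assumes "psd A1" "0 \<le> c1" "psd A2" "0 \<le> c2"
  shows "Bm A1 c1 - Bm A2 c2 = Bm A1 c1 ** ((mat 1 + c2 *\<^sub>R A2) - (mat 1 + c1 *\<^sub>R A1)) ** Bm A2 c2"
proof -
  note i1 = inv_props[OF invertible_M[OF assms(1,2)]]
  note i2 = inv_props[OF invertible_M[OF assms(3,4)]]
  have "Bm A1 c1 ** ((mat 1 + c2 *\<^sub>R A2) - (mat 1 + c1 *\<^sub>R A1)) ** Bm A2 c2
     = Bm A1 c1 ** ((mat 1 + c2 *\<^sub>R A2) ** Bm A2 c2) - (Bm A1 c1 ** (mat 1 + c1 *\<^sub>R A1)) ** Bm A2 c2"
    by (simp only: mm_diff_left mm_diff_right matrix_mul_assoc)
  also have "\<dots> = Bm A1 c1 - Bm A2 c2" using i1 i2 by simp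
  finally show ?thesis ..
qed

lemma entry3_bound:
  fixes X D Y :: "complex^'n::finite^'n"
  assumes "\<And>a b. cmod (X $ a $ b) \<le> 1" "\<And>a b. cmod (Y $ a $ b) \<le> 1"
  shows "cmod ((X ** D ** Y) $ j $ k) \<le> (\<Sum>l\<in>UNIV. \<Sum>m\<in>UNIV. cmod (D $ l $ m))"
proof -
  have "(X ** D ** Y) $ j $ k = (\<Sum>m\<in>UNIV. (\<Sum>l\<in>UNIV. X $ j $ l * D $ l $ m) * Y $ m $ k)"
    by (simp add: mm_entry)
  also have "\<dots> = (\<Sum>l\<in>UNIV. \<Sum>m\<in>UNIV. X $ j $ l * D $ l $ m * Y $ m $ k)"
    by (simp add: sum_distrib_right) (rule sum.swap)
  finally have e: "(X ** D ** Y) $ j $ k = (\<Sum>l\<in>UNIV. \<Sum>m\<in>UNIV. X $ j $ l * D $ l $ m * Y $ m $ k)" .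
  have "cmod ((X ** D ** Y) $ j $ k) \<le> (\<Sum>l\<in>UNIV. cmod (\<Sum>m\<in>UNIV. X $ j $ l * D $ l $ m * Y $ m $ k))"
    unfolding e by (rule norm_sum)
  also have "\<dots> \<le> (\<Sum>l\<in>UNIV. \<Sum>m\<in>UNIV. cmod (X $ j $ l * D $ l $ m * Y $ m $ k))"
    by (intro sum_mono norm_sum)
  also have "\<dots> \<le> (\<Sum>l\<in>UNIV. \<Sum>m\<in>UNIV. cmod (D $ l $ m))"
  proof (intro sum_mono)
    fix l m
    have "cmod (X $ j $ l * D $ l $ m * Y $ m $ k) = cmod (X $ j $ l) * cmod (D $ l $ m) * cmod (Y $ m $ k)"
      by (simp add: norm_mult)
    also have "\<dots> \<le> 1 * cmod (D $ l $ m) * 1"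
      by (intro mult_mono assms norm_ge_zero) auto
    finally show "cmod (X $ j $ l * D $ l $ m * Y $ m $ k) \<le> cmod (D $ l $ m)" by simp
  qed
  finally show ?thesis .
qed

lemma B_lip:
  fixes A1 A2 :: "complex^'n::finite^'n"
  assumes "psd A1" "0 \<le> c1" "psd A2" "0 \<le> c2"
  shows "cmod (Bm A1 c1 $ j $ k - Bm A2 c2 $ j $ k)
     \<le> (\<Sum>l\<in>UNIV. \<Sum>m\<in>UNIV. cmod (c2 *\<^sub>R A2 $ l $ m - c1 *\<^sub>R A1 $ l $ m))"
proof -
  have "Bm A1 c1 $ j $ k - Bm A2 c2 $ j $ k = (Bm A1 c1 - Bm A2 c2) $ j $ k" by simp
  also have "\<dots> = (Bm A1 c1 ** ((mat 1 + c2 *\<^sub>R A2) - (mat 1 + c1 *\<^sub>R A1)) ** Bm A2 c2) $ j $ k"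
    by (simp only: B_diff[OF assms])
  finally have e: "Bm A1 c1 $ j $ k - Bm A2 c2 $ j $ k = (Bm A1 c1 ** ((mat 1 + c2 *\<^sub>R A2) - (mat 1 + c1 *\<^sub>R A1)) ** Bm A2 c2) $ j $ k" .
  show ?thesis unfolding e
    using entry3_bound[of "Bm A1 c1" "Bm A2 c2" "(mat 1 + c2 *\<^sub>R A2) - (mat 1 + c1 *\<^sub>R A1)" j k]
      B_bound[OF assms(1,2)] B_bound[OF assms(3,4)] by simp
qed


lemma ev_within: "(\<And>t. t \<in> S \<Longrightarrow> P t) \<Longrightarrow> eventually P (at c within S)"
  unfolding eventually_at_filter by (auto intro!: always_eventually)

lemma B_diff_c:
  fixes A :: "complex^'n::finite^'n"
  assumes "psd A" "0 \<le> t" "0 \<le> c"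
  shows "Bm A t - Bm A c = (c - t) *\<^sub>R (Bm A t ** A ** Bm A c)"
proof -
  have "(mat 1 + c *\<^sub>R A) - (mat 1 + t *\<^sub>R A) = (c - t) *\<^sub>R A" by (simp add: algebra_simps)
  then show ?thesis using B_diff[OF assms(1,2,1,3)]
    by (simp add: matrix_scalar_ac scalar_matrix_assoc)
qed

lemma B_cont:
  fixes A :: "complex^'n::finite^'n"
  assumes "psd A" "0 \<le> c"
  shows "((\<lambda>t. Bm A t $ j $ k) \<longlongrightarrow> Bm A c $ j $ k) (at c within {0..})"
proof -
  let ?S = "(\<Sum>l\<in>UNIV. \<Sum>m\<in>UNIV. cmod (A $ l $ m))"
  have "((\<lambda>t. Bm A t $ j $ k - Bm A c $ j $ k) \<longlongrightarrow> 0) (at c within {0..})"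
  proof (rule Lim_null_comparison)
    show "eventually (\<lambda>t. norm (Bm A t $ j $ k - Bm A c $ j $ k) \<le> \<bar>t - c\<bar> * ?S) (at c within {0..})"
    proof (rule ev_within)
      fix t :: real assume "t \<in> {0..}"
      then have t: "0 \<le> t" by simp
      have "Bm A t $ j $ k - Bm A c $ j $ k = (Bm A t - Bm A c) $ j $ k" by simp
      also have "\<dots> = ((c - t) *\<^sub>R (Bm A t ** A ** Bm A c)) $ j $ k"
        by (simp only: B_diff_c[OF assms(1) t assms(2)])
      finally have "Bm A t $ j $ k - Bm A c $ j $ k = (c - t) *\<^sub>R (Bm A t ** A ** Bm A c) $ j $ k" by simp
      also have "norm \<dots> \<le> \<bar>t - c\<bar> * ?S"
        using entry3_bound[of "Bm A t" "Bm A c" A j k] B_bound[OF assms(1) t] B_bound[OF assms]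
        by (auto simp: abs_minus_commute intro!: mult_left_mono)
      finally show "norm (Bm A t $ j $ k - Bm A c $ j $ k) \<le> \<bar>t - c\<bar> * ?S" .
    qed
    have "((\<lambda>t. \<bar>t - c\<bar> * ?S) \<longlongrightarrow> \<bar>c - c\<bar> * ?S) (at c within {0..})"
      by (intro tendsto_intros)
    then show "((\<lambda>t. \<bar>t - c\<bar> * ?S) \<longlongrightarrow> 0) (at c within {0..})" by simp
  qed
  then show ?thesis by (simp add: LIM_zero_iff)
qed

lemma vd_from_quot:
  fixes f :: "real \<Rightarrow> complex"
  assumes "((\<lambda>t. (f t - f s) /\<^sub>R (t - s)) \<longlongrightarrow> D) (at s within S)"
  shows "(f has_vector_derivative D) (at s within S)"
proof -
  have re: "((\<lambda>t. Re ((f t - f s) /\<^sub>R (t - s))) \<longlongrightarrow> Re D) (at s within S)"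
    using tendsto_Re[OF assms] .
  have im: "((\<lambda>t. Im ((f t - f s) /\<^sub>R (t - s))) \<longlongrightarrow> Im D) (at s within S)"
    using tendsto_Im[OF assms] .
  show ?thesis unfolding has_vector_derivative_complex_iff has_field_derivative_iff
    using re im by (simp add: divide_inverse mult.commute)
qed

lemma B_deriv:
  fixes A :: "complex^'n::finite^'n"
  assumes "psd A" "0 \<le> c"
  shows "((\<lambda>t. Bm A t $ j $ k) has_vector_derivative (- (Bm A c ** A ** Bm A c) $ j $ k)) (at c within {0..})"
proof (rule vd_from_quot)
  have lim: "((\<lambda>t. - (Bm A t ** A ** Bm A c) $ j $ k) \<longlongrightarrow> - (Bm A c ** A ** Bm A c) $ j $ k) (at c within {0..})"
    unfolding vector_uminus_component mm_entry
    by (intro tendsto_intros B_cont[OF assms])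
  show "((\<lambda>t. (Bm A t $ j $ k - Bm A c $ j $ k) /\<^sub>R (t - c)) \<longlongrightarrow> - (Bm A c ** A ** Bm A c) $ j $ k) (at c within {0..})"
  proof (rule Lim_transform_eventually[OF lim])
    show "eventually (\<lambda>t. - (Bm A t ** A ** Bm A c) $ j $ k = (Bm A t $ j $ k - Bm A c $ j $ k) /\<^sub>R (t - c)) (at c within {0..})"
      unfolding eventually_at_filter
    proof (intro always_eventually allI impI)
      fix t :: real assume "t \<noteq> c" "t \<in> {0..}"
      then have t: "0 \<le> t" and tc: "t - c \<noteq> 0" by auto
      have "Bm A t $ j $ k - Bm A c $ j $ k = (Bm A t - Bm A c) $ j $ k" by simp
      also have "\<dots> = ((c - t) *\<^sub>R (Bm A t ** A ** Bm A c)) $ j $ k"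
        by (simp only: B_diff_c[OF assms(1) t assms(2)])
      finally have "Bm A t $ j $ k - Bm A c $ j $ k = (c - t) *\<^sub>R (Bm A t ** A ** Bm A c) $ j $ k" by simp
      then show "- (Bm A t ** A ** Bm A c) $ j $ k = (Bm A t $ j $ k - Bm A c $ j $ k) /\<^sub>R (t - c)"
        using tc by (simp add: scaleR_conv_of_real field_simps)
    qed
  qed
qed


definition mder :: "(real \<Rightarrow> complex^'n::finite^'m::finite) \<Rightarrow> complex^'n^'m \<Rightarrow> real set \<Rightarrow> real \<Rightarrow> bool" where
  "mder X D S c \<longleftrightarrow> (\<forall>j k. ((\<lambda>t. X t $ j $ k) has_vector_derivative D $ j $ k) (at c within S))"

lemma mder_mult:
  fixes X :: "real \<Rightarrow> complex^'n::finite^'m::finite" and Y :: "real \<Rightarrow> complex^'p::finite^'n"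
  assumes "mder X DX S c" "mder Y DY S c"
  shows "mder (\<lambda>t. X t ** Y t) (X c ** DY + DX ** Y c) S c"
  unfolding mder_def
proof (intro allI)
  fix j k
  have "((\<lambda>t. \<Sum>l\<in>UNIV. X t $ j $ l * Y t $ l $ k) has_vector_derivative
      (\<Sum>l\<in>UNIV. X c $ j $ l * DY $ l $ k + DX $ j $ l * Y c $ l $ k)) (at c within S)"
    using assms unfolding mder_def
    by (intro has_vector_derivative_sum has_vector_derivative_mult) auto
  then show "((\<lambda>t. (X t ** Y t) $ j $ k) has_vector_derivative (X c ** DY + DX ** Y c) $ j $ k) (at c within S)"
    by (simp add: mm_entry sum.distrib)
qed

lemma mder_const: "mder (\<lambda>t. C) 0 S c"
  unfolding mder_def by (simp add: has_vector_derivative_const)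

lemma mder_B:
  fixes A :: "complex^'n::finite^'n"
  assumes "psd A" "0 \<le> c"
  shows "mder (Bm A) (- (Bm A c ** A ** Bm A c)) {0..} c"
  unfolding mder_def using B_deriv[OF assms] by simp

definition qf :: "complex^'n::finite^'n \<Rightarrow> 'n \<Rightarrow> real \<Rightarrow> real" where
  "qf A i t = Re (Bm A t $ i $ i)"
definition pf :: "complex^'n::finite^'n \<Rightarrow> 'n \<Rightarrow> real \<Rightarrow> real" where
  "pf A i t = Re ((Bm A t ** A ** Bm A t) $ i $ i)"
definition rf :: "complex^'n::finite^'n \<Rightarrow> 'n \<Rightarrow> real \<Rightarrow> real" where
  "rf A i t = Re ((Bm A t ** A ** Bm A t ** A ** Bm A t) $ i $ i)"

lemma qf_deriv:
  assumes "psd A" "0 \<le> c"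
  shows "(qf A i has_real_derivative (- pf A i c)) (at c within {0..})"
proof -
  have "((\<lambda>t. Re (Bm A t $ i $ i)) has_real_derivative Re (- (Bm A c ** A ** Bm A c) $ i $ i)) (at c within {0..})"
    by (rule has_field_derivative_Re) (rule B_deriv[OF assms])
  then show ?thesis unfolding qf_def[abs_def] pf_def by simp
qed

lemma pf_deriv:
  assumes "psd A" "0 \<le> c"
  shows "(pf A i has_real_derivative (- 2 * rf A i c)) (at c within {0..})"
proof -
  let ?B = "Bm A c"
  have m1: "mder (\<lambda>t. Bm A t ** A) (?B ** 0 + (- (?B ** A ** ?B)) ** A) {0..} c"
    by (rule mder_mult[OF mder_B[OF assms] mder_const])
  have m2: "mder (\<lambda>t. Bm A t ** A ** Bm A t)
      ((?B ** A) ** (- (?B ** A ** ?B)) + (?B ** 0 + (- (?B ** A ** ?B)) ** A) ** ?B) {0..} c"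
    by (rule mder_mult[OF m1 mder_B[OF assms]])
  have eq: "(?B ** A) ** (- (?B ** A ** ?B)) + (?B ** 0 + (- (?B ** A ** ?B)) ** A) ** ?B
     = - (?B ** A ** ?B ** A ** ?B) - (?B ** A ** ?B ** A ** ?B)"
    by (simp only: times0_right add_0_left mm_neg_left mm_neg_right matrix_mul_assoc) simp
  have "((\<lambda>t. Re ((Bm A t ** A ** Bm A t) $ i $ i)) has_real_derivative
      Re (((?B ** A) ** (- (?B ** A ** ?B)) + (?B ** 0 + (- (?B ** A ** ?B)) ** A) ** ?B) $ i $ i)) (at c within {0..})"
    using m2 unfolding mder_def by (intro has_field_derivative_Re) auto
  then show ?thesis unfolding eq pf_def[abs_def] rf_def by simp
qed

lemma qf_pos:
  assumes "psd A" "0 \<le> c"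
  shows "0 < qf A i c"
proof -
  define L where "L = (\<Sum>j\<in>UNIV. \<Sum>k\<in>UNIV. cmod ((mat 1 + c *\<^sub>R A)$j$k))"
  have "0 < L" "1 / L\<^sup>2 \<le> qf A i c" using q_lower(1)[OF assms] q_lower(2)[OF assms] unfolding L_def qf_def by auto
  then show ?thesis by (smt (verit) divide_pos_pos zero_less_power)
qed

lemma qf_le1:
  assumes "psd A" "0 \<le> c"
  shows "qf A i c \<le> 1"
  using B_bound[OF assms, of i i] abs_Re_le_cmod[of "Bm A c $ i $ i"] unfolding qf_def by linarith

definition Gf :: "complex^'n::finite^'n \<Rightarrow> 'n \<Rightarrow> real \<Rightarrow> real" where
  "Gf A i t = - ln (qf A i t) / ln 2"
definition G1f :: "complex^'n::finite^'n \<Rightarrow> 'n \<Rightarrow> real \<Rightarrow> real" where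
  "G1f A i t = pf A i t / (qf A i t * ln 2)"
definition G2f :: "complex^'n::finite^'n \<Rightarrow> 'n \<Rightarrow> real \<Rightarrow> real" where
  "G2f A i t = ((pf A i t)\<^sup>2 - 2 * rf A i t * qf A i t) / ((qf A i t)\<^sup>2 * ln 2)"

lemma Gf_deriv:
  assumes "psd A" "0 \<le> c"
  shows "(Gf A i has_real_derivative G1f A i c) (at c within {0..})"
proof -
  have q: "0 < qf A i c" by (rule qf_pos[OF assms])
  have l: "((\<lambda>t. ln (qf A i t)) has_real_derivative (1 / qf A i c) * (- pf A i c)) (at c within {0..})"
    by (rule DERIV_chain2[OF DERIV_ln_divide[OF q] qf_deriv[OF assms]])
  have "((\<lambda>t. - ln (qf A i t) / ln 2) has_real_derivative (- ((1 / qf A i c) * (- pf A i c)) / ln 2)) (at c within {0..})"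
    by (intro DERIV_cdivide DERIV_minus l)
  then show ?thesis unfolding Gf_def[abs_def] G1f_def by simp
qed

lemma G1f_deriv:
  assumes "psd A" "0 \<le> c"
  shows "(G1f A i has_real_derivative G2f A i c) (at c within {0..})"
proof -
  have q: "0 < qf A i c" by (rule qf_pos[OF assms])
  have "((\<lambda>t. pf A i t / (qf A i t * ln 2)) has_real_derivative
     ((- 2 * rf A i c) * (qf A i c * ln 2) - pf A i c * ((- pf A i c) * ln 2)) / (qf A i c * ln 2)\<^sup>2) (at c within {0..})"
    using DERIV_divide[OF pf_deriv[OF assms] DERIV_cmult_right[where c="ln 2", OF qf_deriv[OF assms]]] q
    by (simp add: power2_eq_square)
  moreover have "((- 2 * rf A i c) * (qf A i c * ln 2) - pf A i c * ((- pf A i c) * ln 2)) / (qf A i c * ln 2)\<^sup>2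
     = G2f A i c"
    unfolding G2f_def using q by (simp add: field_simps power2_eq_square)
  ultimately show ?thesis unfolding G1f_def[abs_def] by simp
qed


lemma entry_mult_bound:
  fixes X Y :: "complex^'n::finite^'n"
  assumes "\<And>a b. cmod (X $ a $ b) \<le> bx" "\<And>a b. cmod (Y $ a $ b) \<le> by"
  shows "cmod ((X ** Y) $ j $ k) \<le> real CARD('n) * (bx * by)"
proof -
  have "cmod ((X ** Y) $ j $ k) \<le> (\<Sum>l\<in>UNIV. cmod (X $ j $ l * Y $ l $ k))"
    unfolding mm_entry by (rule norm_sum)
  also have "\<dots> \<le> (\<Sum>l\<in>(UNIV::'n set). bx * by)"
    by (intro sum_mono) (simp add: norm_mult, intro mult_mono assms norm_ge_zero, 
        use assms[of j l] norm_ge_zero[of "X $ j $ l"] in linarith)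
  finally show ?thesis by simp
qed

context
  fixes A :: "complex^'n::finite^'n" and K c :: real
  assumes psdA: "psd A" and c0: "0 \<le> c" and c1: "c \<le> 1"
    and AK: "\<And>a b. cmod (A $ a $ b) \<le> K" and K1: "1 \<le> K"
begin

lemma Bb: "cmod (Bm A c $ a $ b) \<le> 1" by (rule B_bound[OF psdA c0])

lemma pf_bound: "\<bar>pf A i c\<bar> \<le> real CARD('n)^2 * K"
proof -
  have "\<bar>pf A i c\<bar> \<le> cmod ((Bm A c ** A ** Bm A c) $ i $ i)"
    unfolding pf_def by (rule abs_Re_le_cmod)
  also have "\<dots> \<le> (\<Sum>l\<in>UNIV. \<Sum>m\<in>UNIV. cmod (A $ l $ m))"
    by (rule entry3_bound) (rule Bb)+
  also have "\<dots> \<le> (\<Sum>l\<in>(UNIV::'n set). \<Sum>m\<in>(UNIV::'n set). K)"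
    by (intro sum_mono AK)
  finally show ?thesis by (simp add: power2_eq_square)
qed

lemma rf_bound: "\<bar>rf A i c\<bar> \<le> real CARD('n)^4 * K^2"
proof -
  have eq: "Bm A c ** A ** Bm A c ** A ** Bm A c = Bm A c ** (A ** Bm A c ** A) ** Bm A c"
    by (simp add: matrix_mul_assoc)
  have ab: "cmod ((A ** Bm A c) $ a $ b) \<le> real CARD('n) * (K * 1)" for a b
    by (rule entry_mult_bound) (use AK Bb in auto)
  have aba: "cmod ((A ** Bm A c ** A) $ a $ b) \<le> real CARD('n) * ((real CARD('n) * (K * 1)) * K)" for a b
    by (rule entry_mult_bound) (use ab AK in auto)
  have "\<bar>rf A i c\<bar> \<le> cmod ((Bm A c ** (A ** Bm A c ** A) ** Bm A c) $ i $ i)"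
    unfolding rf_def eq by (rule abs_Re_le_cmod)
  also have "\<dots> \<le> (\<Sum>l\<in>UNIV. \<Sum>m\<in>UNIV. cmod ((A ** Bm A c ** A) $ l $ m))"
    by (rule entry3_bound) (rule Bb)+
  also have "\<dots> \<le> (\<Sum>l\<in>(UNIV::'n set). \<Sum>m\<in>(UNIV::'n set). real CARD('n) * ((real CARD('n) * (K * 1)) * K))"
    by (intro sum_mono aba)
  finally show ?thesis by (simp add: power2_eq_square power4_eq_xxxx mult_ac)
qed

lemma invq_bound: "1 / qf A i c \<le> 4 * real CARD('n)^4 * K^2"
proof -
  define L where "L = (\<Sum>j\<in>UNIV. \<Sum>k\<in>UNIV. cmod ((mat 1 + c *\<^sub>R A)$j$k))"
  have Lp: "0 < L" and ql: "1 / L\<^sup>2 \<le> qf A i c"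
    using q_lower(1)[OF psdA c0] q_lower(2)[OF psdA c0] unfolding L_def qf_def by auto
  have "L \<le> (\<Sum>j\<in>(UNIV::'n set). \<Sum>k\<in>(UNIV::'n set). 2 * K)"
    unfolding L_def
  proof (intro sum_mono)
    fix j k :: 'n
    have "cmod ((mat 1 + c *\<^sub>R A)$j$k) \<le> cmod ((mat 1 :: complex^'n^'n)$j$k) + cmod ((c *\<^sub>R A)$j$k)"
      unfolding vector_add_component by (rule norm_triangle_ineq)
    also have "\<dots> \<le> 1 + c * K"
      using AK[of j k] c0 by (intro add_mono) (auto simp: mat_def mult_left_mono)
    also have "\<dots> \<le> 2 * K" using c0 c1 K1 AK[of j k]
      by (smt (verit) mult_left_le_one_le)
    finally show "cmod ((mat 1 + c *\<^sub>R A)$j$k) \<le> 2 * K" .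
  qed
  then have L2: "L \<le> 2 * K * real CARD('n)^2" by (simp add: power2_eq_square mult_ac)
  have q: "0 < qf A i c" by (rule qf_pos[OF psdA c0])
  have "1 / qf A i c \<le> L\<^sup>2" using ql q Lp by (simp add: field_simps)
  also have "\<dots> \<le> (2 * K * real CARD('n)^2)\<^sup>2" by (rule power_mono[OF L2]) (use Lp in simp)
  also have "\<dots> = 4 * real CARD('n)^4 * K^2" by (simp add: power2_eq_square power4_eq_xxxx mult_ac)
  finally show ?thesis .
qed

end


context
  fixes A :: "complex^'n::finite^'n" and K c :: real
  assumes psdA: "psd A" and c0: "0 \<le> c" and c1: "c \<le> 1"
    and AK: "\<And>a b. cmod (A $ a $ b) \<le> K" and K1: "1 \<le> K"
begin

lemma N1: "1 \<le> real CARD('n)" by simp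

lemma G1_bound: "\<bar>G1f A i c\<bar> \<le> 48 * real CARD('n)^12 * K^6 / ln 2"
proof -
  let ?N = "real CARD('n)"
  have q: "0 < qf A i c" by (rule qf_pos[OF psdA c0])
  have "\<bar>G1f A i c\<bar> = \<bar>pf A i c\<bar> * (1 / qf A i c) / ln 2"
    unfolding G1f_def using q by (simp add: abs_mult)
  also have "\<dots> \<le> (?N^2 * K) * (4 * ?N^4 * K^2) / ln 2"
    by (intro divide_right_mono mult_mono pf_bound[OF psdA c0 c1 AK K1] invq_bound[OF psdA c0 c1 AK K1])
       (use q K1 in auto)
  also have "\<dots> \<le> 48 * ?N^12 * K^6 / ln 2"
  proof (intro divide_right_mono)
    have a: "?N^6 \<le> ?N^12" by (rule power_increasing) auto
    have b: "K^3 \<le> K^6" by (rule power_increasing) (use K1 in auto)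
    have "(?N^2 * K) * (4 * ?N^4 * K^2) = 4 * (?N^6 * K^3)" by (simp add: eval_nat_numeral mult_ac)
    also have "\<dots> \<le> 4 * (?N^12 * K^6)" using a b K1 by (intro mult_left_mono mult_mono) auto
    also have "\<dots> \<le> 48 * ?N^12 * K^6" using K1 by simp
    finally show "(?N^2 * K) * (4 * ?N^4 * K^2) \<le> 48 * ?N^12 * K^6" .
  qed simp
  finally show ?thesis .
qed

lemma G2_bound: "\<bar>G2f A i c\<bar> \<le> 48 * real CARD('n)^12 * K^6 / ln 2"
proof -
  let ?N = "real CARD('n)"
  have q: "0 < qf A i c" by (rule qf_pos[OF psdA c0])
  have q1: "qf A i c \<le> 1" by (rule qf_le1[OF psdA c0])
  have p: "\<bar>pf A i c\<bar> \<le> ?N^2 * K" by (rule pf_bound[OF psdA c0 c1 AK K1])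
  have r: "\<bar>rf A i c\<bar> \<le> ?N^4 * K^2" by (rule rf_bound[OF psdA c0 c1 AK K1])
  have iq: "1 / qf A i c \<le> 4 * ?N^4 * K^2" by (rule invq_bound[OF psdA c0 c1 AK K1])
  have num: "\<bar>(pf A i c)\<^sup>2 - 2 * rf A i c * qf A i c\<bar> \<le> 3 * (?N^4 * K^2)"
  proof -
    have "\<bar>(pf A i c)\<^sup>2 - 2 * rf A i c * qf A i c\<bar> \<le> (pf A i c)\<^sup>2 + 2 * \<bar>rf A i c\<bar> * qf A i c"
      using abs_triangle_ineq4[of "(pf A i c)\<^sup>2" "2 * rf A i c * qf A i c"] q by (simp add: abs_mult)
    also have "(pf A i c)\<^sup>2 \<le> (?N^2 * K)\<^sup>2"
      using p by (metis abs_ge_zero power2_abs power_mono)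
    also have "2 * \<bar>rf A i c\<bar> * qf A i c \<le> 2 * (?N^4 * K^2) * 1"
      using r q q1 by (intro mult_mono) auto
    finally show ?thesis by (simp add: power2_eq_square power4_eq_xxxx mult_ac)
  qed
  have "\<bar>G2f A i c\<bar> = \<bar>(pf A i c)\<^sup>2 - 2 * rf A i c * qf A i c\<bar> * (1 / qf A i c)\<^sup>2 / ln 2"
    unfolding G2f_def using q by (simp add: abs_mult power_divide)
  also have "\<dots> \<le> (3 * (?N^4 * K^2)) * (4 * ?N^4 * K^2)\<^sup>2 / ln 2"
    by (intro divide_right_mono mult_mono num power_mono iq) (use q in auto)
  also have "\<dots> = 48 * ?N^12 * K^6 / ln 2"
    by (simp add: eval_nat_numeral mult_ac)
  finally show ?thesis .
qed

end



definition ApH :: "complex^'t::finite^'r::finite \<Rightarrow> complex^'t^'t" where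
  "ApH H = (1 / real CARD('t)) *\<^sub>R (adjoint_mat H ** H)"

lemma ApH_entry: "ApH H $ a $ b = complex_of_real (1 / real CARD('t::finite)) * (\<Sum>r\<in>UNIV. cnj (H $ r $ a) * H $ r $ b)"
  for H :: "complex^'t::finite^'r::finite"
proof -
  have "ApH H $ a $ b = (1 / real CARD('t)) *\<^sub>R ((adjoint_mat H ** H) $ a $ b)"
    by (simp add: ApH_def)
  then show ?thesis by (simp add: mm_entry adjoint_mat_def scaleR_conv_of_real)
qed

lemma psd_ApH: "psd (ApH (H :: complex^'t::finite^'r::finite))"
  unfolding psd_def
proof
  fix v :: "complex^'t"
  define w where "w r = (\<Sum>k\<in>UNIV. H $ r $ k * v $ k)" for r
  have "(\<Sum>j\<in>UNIV. cnj (v$j) * (ApH H *v v)$j)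
     = complex_of_real (1 / real CARD('t)) * (\<Sum>j\<in>UNIV. \<Sum>k\<in>UNIV. \<Sum>r\<in>UNIV. cnj (v$j) * cnj (H $ r $ j) * (H $ r $ k * v $ k))"
    by (simp add: matrix_vector_mult_def ApH_entry sum_distrib_left sum_distrib_right mult_ac)
  also have "(\<Sum>j\<in>UNIV. \<Sum>k\<in>UNIV. \<Sum>r\<in>UNIV. cnj (v$j) * cnj (H $ r $ j) * (H $ r $ k * v $ k))
     = (\<Sum>r\<in>UNIV. cnj (w r) * w r)"
  proof -
    have "(\<Sum>j\<in>UNIV. \<Sum>k\<in>UNIV. \<Sum>r\<in>UNIV. cnj (v$j) * cnj (H $ r $ j) * (H $ r $ k * v $ k))
       = (\<Sum>j\<in>UNIV. \<Sum>r\<in>UNIV. \<Sum>k\<in>UNIV. cnj (v$j) * cnj (H $ r $ j) * (H $ r $ k * v $ k))"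
      by (intro sum.cong refl) (rule sum.swap)
    also have "\<dots> = (\<Sum>r\<in>UNIV. \<Sum>j\<in>UNIV. \<Sum>k\<in>UNIV. cnj (v$j) * cnj (H $ r $ j) * (H $ r $ k * v $ k))"
      by (rule sum.swap)
    also have "\<dots> = (\<Sum>r\<in>UNIV. cnj (w r) * w r)"
      by (simp add: w_def sum_distrib_left sum_distrib_right mult_ac)
    finally show ?thesis .
  qed
  finally have e: "(\<Sum>j\<in>UNIV. cnj (v$j) * (ApH H *v v)$j) =
      complex_of_real (1 / real CARD('t)) * (\<Sum>r\<in>UNIV. cnj (w r) * w r)" .
  show "0 \<le> Re (\<Sum>j\<in>UNIV. cnj (v$j) * (ApH H *v v)$j)"
    unfolding e cnj_mult_self by (simp add: Re_sum sum_nonneg)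
qed

lemma to_matrix_nth: "to_matrix x $ r $ a = x (r, a)"
  by (simp add: to_matrix_def)

lemma Ap_entry: "ApH (to_matrix x :: complex^'t::finite^'r::finite) $ a $ b = complex_of_real (1 / real CARD('t)) * Aent x a b"
  by (simp add: ApH_entry to_matrix_nth Aent_def)

lemma col_sum_le: "(\<Sum>r\<in>UNIV. (cmod (x (r, a)))\<^sup>2) \<le> (\<Sum>e\<in>UNIV. (cmod (x (e::'r::finite \<times> 't::finite)))\<^sup>2)"
proof -
  have "(\<Sum>e\<in>UNIV. (cmod (x (e::'r \<times> 't)))\<^sup>2) = (\<Sum>r\<in>UNIV. \<Sum>t\<in>UNIV. (cmod (x (r, t)))\<^sup>2)"
    by (simp add: sum.cartesian_product flip: UNIV_Times_UNIV)
  also have "\<dots> \<ge> (\<Sum>r\<in>UNIV. (cmod (x (r, a)))\<^sup>2)"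
    by (intro sum_mono member_le_sum) auto
  finally show ?thesis .
qed

lemma Aent_bound: "cmod (Aent x a b) \<le> KK x"
proof -
  have "cmod (Aent x a b) \<le> (\<Sum>r\<in>UNIV. cmod (cnj (x (r, a)) * x (r, b)))"
    unfolding Aent_def by (rule norm_sum)
  also have "\<dots> \<le> (\<Sum>r\<in>UNIV. ((cmod (x (r, a)))\<^sup>2 + (cmod (x (r, b)))\<^sup>2) / 2)"
  proof (rule sum_mono)
    fix r
    have "0 \<le> (cmod (x (r, a)) - cmod (x (r, b)))\<^sup>2" by simp
    then show "cmod (cnj (x (r, a)) * x (r, b)) \<le> ((cmod (x (r, a)))\<^sup>2 + (cmod (x (r, b)))\<^sup>2) / 2"
      by (simp add: norm_mult power2_diff)
  qed
  also have "\<dots> = ((\<Sum>r\<in>UNIV. (cmod (x (r, a)))\<^sup>2) + (\<Sum>r\<in>UNIV. (cmod (x (r, b)))\<^sup>2)) / 2"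
    by (simp only: sum.distrib[symmetric] sum_divide_distrib)
  also have "\<dots> \<le> ((\<Sum>e\<in>UNIV. (cmod (x e))\<^sup>2) + (\<Sum>e\<in>UNIV. (cmod (x e))\<^sup>2)) / 2"
    by (intro divide_right_mono add_mono col_sum_le) auto
  also have "\<dots> \<le> KK x" by (simp add: KK_def)
  finally show ?thesis .
qed

lemma Ap_bound: "cmod (ApH (to_matrix x :: complex^'t::finite^'r::finite) $ a $ b) \<le> KK x"
proof -
  have "cmod (ApH (to_matrix x :: complex^'t^'r) $ a $ b) = (1 / real CARD('t)) * cmod (Aent x a b)"
    unfolding Ap_entry norm_mult norm_of_real by simp
  also have "\<dots> \<le> 1 * KK x"
    by (intro mult_mono Aent_bound) (auto simp: KK_def intro: add_nonneg_nonneg sum_nonneg)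
  finally show ?thesis by simp
qed

lemma to_matrix_meas[measurable]:
  "(to_matrix :: ('r::finite \<times> 't::finite \<Rightarrow> complex) \<Rightarrow> complex^'t^'r) \<in> borel_measurable channel_dist"
proof (subst borel_measurable_euclidean_space, intro ballI)
  fix b :: "complex^'t^'r"
  have "(\<lambda>x. to_matrix x \<bullet> b) = (\<lambda>x. \<Sum>i\<in>UNIV. \<Sum>j\<in>UNIV. x (i, j) \<bullet> (b $ i $ j))"
    by (simp add: inner_vec_def to_matrix_nth)
  moreover have "(\<lambda>x::'r \<times> 't \<Rightarrow> complex. \<Sum>i\<in>UNIV. \<Sum>j\<in>UNIV. x (i, j) \<bullet> (b $ i $ j)) \<in> borel_measurable channel_dist"
    unfolding channel_dist_def by measurable
  ultimately show "(\<lambda>x. to_matrix x \<bullet> b) \<in> borel_measurable channel_dist" by simp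
qed

lemma ApH_tendsto: "((\<lambda>H. ApH H $ l $ m) \<longlongrightarrow> ApH (H0::complex^'t::finite^'r::finite) $ l $ m) (at H0)"
  unfolding ApH_entry by (intro tendsto_intros)

lemma B_contH:
  assumes s: "0 \<le> s"
  shows "continuous_on UNIV (\<lambda>H::complex^'t::finite^'r::finite. Bm (ApH H) s $ j $ k)"
proof (rule continuous_at_imp_continuous_on, intro ballI)
  fix H0 :: "complex^'t^'r"
  let ?g = "\<lambda>H::complex^'t^'r. (\<Sum>l\<in>UNIV. \<Sum>m\<in>UNIV. cmod (s *\<^sub>R ApH H0 $ l $ m - s *\<^sub>R ApH H $ l $ m))"
  have "((\<lambda>H. Bm (ApH H) s $ j $ k - Bm (ApH H0) s $ j $ k) \<longlongrightarrow> 0) (at H0)"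
  proof (rule Lim_null_comparison)
    show "eventually (\<lambda>H. norm (Bm (ApH H) s $ j $ k - Bm (ApH H0) s $ j $ k) \<le> ?g H) (at H0)"
      by (intro always_eventually allI B_lip psd_ApH s)
    have "(?g \<longlongrightarrow> (\<Sum>l\<in>UNIV. \<Sum>m\<in>UNIV. cmod (s *\<^sub>R ApH H0 $ l $ m - s *\<^sub>R ApH H0 $ l $ m))) (at H0)"
      by (intro tendsto_intros ApH_tendsto)
    then show "(?g \<longlongrightarrow> 0) (at H0)" by simp
  qed
  then show "isCont (\<lambda>H. Bm (ApH H) s $ j $ k) H0"
    unfolding isCont_def by (simp add: LIM_zero_iff)
qed

lemma B_meas[measurable]:
  assumes "0 \<le> s"
  shows "(\<lambda>x. Bm (ApH (to_matrix x :: complex^'t::finite^'r::finite)) s $ j $ k) \<in> borel_measurable channel_dist"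
  by (rule measurable_compose[OF to_matrix_meas borel_measurable_continuous_onI[OF B_contH[OF assms, where j=j and k=k]]])

definition mmeas :: "('a \<Rightarrow> complex^'n::finite^'m::finite) \<Rightarrow> 'a measure \<Rightarrow> bool" where
  "mmeas X M \<longleftrightarrow> (\<forall>j k. (\<lambda>x. X x $ j $ k) \<in> borel_measurable M)"

lemma mmeas_mult:
  fixes X :: "'a \<Rightarrow> complex^'n::finite^'m::finite" and Y :: "'a \<Rightarrow> complex^'p::finite^'n"
  assumes "mmeas X M" "mmeas Y M"
  shows "mmeas (\<lambda>x. X x ** Y x) M"
  unfolding mmeas_def mm_entry
proof (intro allI)
  fix j k
  have [measurable]: "(\<lambda>x. X x $ j $ l) \<in> borel_measurable M" "(\<lambda>x. Y x $ l $ k) \<in> borel_measurable M" for l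
    using assms unfolding mmeas_def by auto
  show "(\<lambda>x. \<Sum>l\<in>UNIV. X x $ j $ l * Y x $ l $ k) \<in> borel_measurable M" by measurable
qed

lemma mmeas_B: "0 \<le> s \<Longrightarrow> mmeas (\<lambda>x. Bm (ApH (to_matrix x :: complex^'t::finite^'r::finite)) s) channel_dist"
  unfolding mmeas_def using B_meas by blast

lemma mmeas_A: "mmeas (\<lambda>x. ApH (to_matrix x :: complex^'t::finite^'r::finite)) channel_dist"
  unfolding mmeas_def Ap_entry Aent_def channel_dist_def by (intro allI) measurable

lemma Re_entry_meas: "mmeas X M \<Longrightarrow> (\<lambda>x. Re (X x $ i $ i)) \<in> borel_measurable M"
proof -
  assume "mmeas X M"
  then have [measurable]: "(\<lambda>x. X x $ i $ i) \<in> borel_measurable M" unfolding mmeas_def by blast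
  show ?thesis by measurable
qed

definition Apx :: "('r::finite \<times> 't::finite \<Rightarrow> complex) \<Rightarrow> complex^'t^'t" where
  "Apx x = ApH (to_matrix x :: complex^'t^'r)"

lemma qf_meas: "0 \<le> s \<Longrightarrow> (\<lambda>x. qf (Apx x) i s) \<in> borel_measurable channel_dist"
  unfolding qf_def Apx_def by (intro Re_entry_meas mmeas_B)

lemma pf_meas: "0 \<le> s \<Longrightarrow> (\<lambda>x. pf (Apx x) i s) \<in> borel_measurable channel_dist"
  unfolding pf_def Apx_def by (intro Re_entry_meas mmeas_B mmeas_mult mmeas_A)

lemma rf_meas: "0 \<le> s \<Longrightarrow> (\<lambda>x. rf (Apx x) i s) \<in> borel_measurable channel_dist"
  unfolding rf_def Apx_def by (intro Re_entry_meas mmeas_B mmeas_mult mmeas_A)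

lemma Gf_meas: "0 \<le> s \<Longrightarrow> (\<lambda>x. Gf (Apx x) i s) \<in> borel_measurable channel_dist"
  using qf_meas[of s i] unfolding Gf_def by measurable

lemma G1f_meas: "0 \<le> s \<Longrightarrow> (\<lambda>x. G1f (Apx x) i s) \<in> borel_measurable channel_dist"
  using qf_meas[of s i] pf_meas[of s i] unfolding G1f_def by measurable

lemma G2f_meas: "0 \<le> s \<Longrightarrow> (\<lambda>x. G2f (Apx x) i s) \<in> borel_measurable channel_dist"
  using qf_meas[of s i] pf_meas[of s i] rf_meas[of s i] unfolding G2f_def by measurable


lemma at_01: "s < 1 \<Longrightarrow> at s within {0..<1} = at s within ({0..}::real set)"
  by (rule at_within_nhd[where S="{..<1}"]) auto

lemma Gf_eq:
  fixes x :: "'r::finite \<times> 't::finite \<Rightarrow> complex"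
  assumes s: "0 \<le> s"
  shows "log 2 (1 + mmse_sinr s (to_matrix x :: complex^'t^'r) i) = Gf (Apx x) i s"
proof -
  have e: "(s / real CARD('t)) *\<^sub>R (adjoint_mat (to_matrix x :: complex^'t^'r) ** to_matrix x) = s *\<^sub>R Apx x"
    by (simp add: Apx_def ApH_def)
  have q: "0 < qf (Apx x) i s" by (rule qf_pos[OF _ s]) (simp add: Apx_def psd_ApH)
  have "mmse_sinr s (to_matrix x :: complex^'t^'r) i = 1 / qf (Apx x) i s - 1"
    unfolding mmse_sinr_def e qf_def ..
  then show ?thesis using q by (simp add: Gf_def log_def ln_div)
qed

lemma I_mmse_eq:
  assumes "0 \<le> s"
  shows "I_mmse TYPE('r::finite \<times> 't::finite) s = (\<Sum>i\<in>UNIV. integral\<^sup>L channel_dist (\<lambda>x::'r \<times> 't \<Rightarrow> complex. Gf (Apx x) i s))"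
  unfolding I_mmse_def by (intro sum.cong refl Bochner_Integration.integral_cong) (simp add: Gf_eq[OF assms])

lemma matrix_inv_1: "matrix_inv (mat 1 :: 'a::field^'n::finite^'n) = mat 1"
proof -
  have "invertible (mat 1 :: 'a^'n^'n)" unfolding invertible_def by (intro exI[of _ "mat 1"]) simp
  from inv_props(1)[OF this] show ?thesis by simp
qed

lemma B0: "Bm A 0 = mat 1" by (simp add: matrix_inv_1)

lemma qf0: "qf A i 0 = 1" by (simp add: qf_def matrix_inv_1) (simp add: mat_def)
lemma pf0: "pf A i 0 = Re (A $ i $ i)" by (simp add: pf_def matrix_inv_1)
lemma rf0: "rf A i 0 = Re ((A ** A) $ i $ i)" by (simp add: rf_def matrix_inv_1)

lemma G1f0: "G1f A i 0 = Re (A $ i $ i) / ln 2" by (simp add: G1f_def qf0 pf0)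
lemma G2f0: "G2f A i 0 = ((Re (A $ i $ i))\<^sup>2 - 2 * Re ((A ** A) $ i $ i)) / ln 2"
  by (simp add: G2f_def qf0 pf0 rf0)
lemma Gf0: "Gf A i 0 = 0" by (simp add: Gf_def qf0)

lemma Apx_ii: "Re (Apx x $ i $ i) = Re (Aent x i i) / real CARD('t)"
  for x :: "'r::finite \<times> 't::finite \<Rightarrow> complex"
  by (simp add: Apx_def Ap_entry)

lemma Aent_cnj: "Aent x k i = cnj (Aent x i k)"
  by (simp add: Aent_def mult.commute)

lemma Apx_sq_ii: "Re ((Apx x ** Apx x) $ i $ i) = (\<Sum>k\<in>UNIV. (cmod (Aent x i k))\<^sup>2) / (real CARD('t))\<^sup>2"
  for x :: "'r::finite \<times> 't::finite \<Rightarrow> complex"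
proof -
  have "(Apx x ** Apx x) $ i $ i = (\<Sum>k\<in>UNIV. complex_of_real (1 / real CARD('t))^2 * (Aent x i k * cnj (Aent x i k)))"
    by (simp add: mm_entry Apx_def Ap_entry Aent_cnj[of x _ i] power2_eq_square mult_ac)
  also have "\<dots> = (\<Sum>k\<in>UNIV. complex_of_real ((cmod (Aent x i k))\<^sup>2 / (real CARD('t))\<^sup>2))"
    by (intro sum.cong refl) (simp add: complex_norm_square[symmetric] power_divide)
  finally show ?thesis by (simp add: Re_sum sum_divide_distrib)
qed

lemma E1: "integral\<^sup>L channel_dist (\<lambda>x::'r::finite \<times> 't::finite \<Rightarrow> complex. G1f (Apx x) i 0)
   = real CARD('r) / real CARD('t) / ln 2"
proof -
  have "integral\<^sup>L channel_dist (\<lambda>x::'r \<times> 't \<Rightarrow> complex. G1f (Apx x) i 0)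
     = integral\<^sup>L channel_dist (\<lambda>x::'r \<times> 't \<Rightarrow> complex. Re (Aent x i i) / (real CARD('t) * ln 2))"
    by (intro Bochner_Integration.integral_cong refl) (simp add: G1f0 Apx_ii)
  also have "\<dots> = real CARD('r) / (real CARD('t) * ln 2)" by (simp add: EA1)
  finally show ?thesis by simp
qed

lemma int_sumsq: "integrable channel_dist (\<lambda>x::'r::finite \<times> 't::finite \<Rightarrow> complex. \<Sum>k\<in>UNIV. (cmod (Aent x i k))\<^sup>2)"
proof (rule Bochner_Integration.integrable_sum)
  fix k :: 't
  show "integrable channel_dist (\<lambda>x::'r \<times> 't \<Rightarrow> complex. (cmod (Aent x i k))\<^sup>2)"
  proof (cases "k = i")
    case True
    then show ?thesis using int_Re_sq[of i] by (simp add: Aent_ii_real)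
  next
    case False
    then show ?thesis by (rule EA3_off(1))
  qed
qed

lemma E2: "integral\<^sup>L channel_dist (\<lambda>x::'r::finite \<times> 't::finite \<Rightarrow> complex. G2f (Apx x) i 0)
   = ((real CARD('r) * real CARD('r) + real CARD('r))
      - 2 * (real CARD('r) * real CARD('r) + real CARD('r) + (real CARD('t) - 1) * real CARD('r)))
     / ((real CARD('t))\<^sup>2 * ln 2)"
proof -
  have "integral\<^sup>L channel_dist (\<lambda>x::'r \<times> 't \<Rightarrow> complex. G2f (Apx x) i 0)
     = integral\<^sup>L channel_dist (\<lambda>x::'r \<times> 't \<Rightarrow> complex.
          ((Re (Aent x i i))\<^sup>2 - 2 * (\<Sum>k\<in>UNIV. (cmod (Aent x i k))\<^sup>2)) / ((real CARD('t))\<^sup>2 * ln 2))"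
    by (intro Bochner_Integration.integral_cong refl)
       (simp add: G2f0 Apx_ii Apx_sq_ii power_divide diff_divide_distrib)
  also have "\<dots> = (integral\<^sup>L channel_dist (\<lambda>x::'r \<times> 't \<Rightarrow> complex. (Re (Aent x i i))\<^sup>2)
       - 2 * integral\<^sup>L channel_dist (\<lambda>x::'r \<times> 't \<Rightarrow> complex. \<Sum>k\<in>UNIV. (cmod (Aent x i k))\<^sup>2))
       / ((real CARD('t))\<^sup>2 * ln 2)"
    using int_Re_sq[of i] int_sumsq[of i]
    by (simp add: Bochner_Integration.integral_diff[OF int_Re_sq integrable_mult_right[OF int_sumsq]])
  also have "\<dots> = ((real CARD('r) * real CARD('r) + real CARD('r))
      - 2 * (real CARD('r) * real CARD('r) + real CARD('r) + (real CARD('t) - 1) * real CARD('r)))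
     / ((real CARD('t))\<^sup>2 * ln 2)"
    by (simp only: EA2 EA3)
  finally show ?thesis .
qed


definition Wf :: "('r::finite \<times> 't::finite \<Rightarrow> complex) \<Rightarrow> real" where
  "Wf x = 48 * real CARD('t)^12 * (KK x)^6 / ln 2"

lemma Wf_int: "integrable channel_dist (Wf :: ('r::finite \<times> 't::finite \<Rightarrow> complex) \<Rightarrow> real)"
proof -
  have e: "(Wf :: ('r \<times> 't \<Rightarrow> complex) \<Rightarrow> real) = (\<lambda>x. (48 * real CARD('t)^12 / ln 2) * KK x ^ 6)"
    by (auto simp: Wf_def fun_eq_iff)
  show ?thesis unfolding e by (intro Bochner_Integration.integrable_mult_right KK_int)
qed

lemma Wf_nonneg: "0 \<le> Wf x" by (simp add: Wf_def)

lemma Apx_psd: "psd (Apx x)" by (simp add: Apx_def psd_ApH)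
lemma Apx_bound: "cmod (Apx x $ a $ b) \<le> KK x" by (simp add: Apx_def Ap_bound)

lemma G1_W: "0 \<le> s \<Longrightarrow> s \<le> 1 \<Longrightarrow> \<bar>G1f (Apx x) i s\<bar> \<le> Wf x"
  for x :: "'r::finite \<times> 't::finite \<Rightarrow> complex"
  unfolding Wf_def by (rule G1_bound[OF Apx_psd _ _ Apx_bound KK_ge1])

lemma G2_W: "0 \<le> s \<Longrightarrow> s \<le> 1 \<Longrightarrow> \<bar>G2f (Apx x) i s\<bar> \<le> Wf x"
  for x :: "'r::finite \<times> 't::finite \<Rightarrow> complex"
  unfolding Wf_def by (rule G2_bound[OF Apx_psd _ _ Apx_bound KK_ge1])

lemma derG_S: "s \<in> {0..<1} \<Longrightarrow> ((\<lambda>t. Gf (Apx x) i t) has_real_derivative G1f (Apx x) i s) (at s within {0..<1})"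
  by (rule has_field_derivative_subset[OF Gf_deriv[OF Apx_psd]]) auto

lemma derG1_S: "s \<in> {0..<1} \<Longrightarrow> ((\<lambda>t. G1f (Apx x) i t) has_real_derivative G2f (Apx x) i s) (at s within {0..<1})"
  by (rule has_field_derivative_subset[OF G1f_deriv[OF Apx_psd]]) auto

lemma int_Gf:
  assumes s: "s \<in> {0..<1}"
  shows "integrable channel_dist (\<lambda>x::'r::finite \<times> 't::finite \<Rightarrow> complex. Gf (Apx x) i s)"
proof (rule Bochner_Integration.integrable_bound[OF Wf_int])
  show "(\<lambda>x::'r \<times> 't \<Rightarrow> complex. Gf (Apx x) i s) \<in> borel_measurable channel_dist"
    using s by (intro Gf_meas) auto
  show "AE x in channel_dist. norm (Gf (Apx x) i s) \<le> norm (Wf x)"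
  proof (rule AE_I2)
    fix x
    have "norm (Gf (Apx x) i s - Gf (Apx x) i 0) \<le> Wf x * norm (s - 0)"
    proof (rule field_differentiable_bound[of "{0..<1}" "\<lambda>t. Gf (Apx x) i t" "\<lambda>t. G1f (Apx x) i t"])
      show "convex {0..<1::real}" by simp
      show "\<And>z. z \<in> {0..<1} \<Longrightarrow> (Gf (Apx x) i has_real_derivative G1f (Apx x) i z) (at z within {0..<1})"
        by (rule derG_S)
      show "\<And>z. z \<in> {0..<1} \<Longrightarrow> norm (G1f (Apx x) i z) \<le> Wf x"
        using G1_W by fastforce
    qed (use s in auto)
    moreover have "0 \<le> Wf x" by (rule Wf_nonneg)
    moreover have "Wf x * s \<le> Wf x" using s Wf_nonneg[of x] by (intro mult_left_le) auto
    ultimately show "norm (Gf (Apx x) i s) \<le> norm (Wf x)" using s by (auto simp: Gf0)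
  qed
qed

lemma int_G1f:
  assumes s: "s \<in> {0..<1}"
  shows "integrable channel_dist (\<lambda>x::'r::finite \<times> 't::finite \<Rightarrow> complex. G1f (Apx x) i s)"
proof (rule Bochner_Integration.integrable_bound[OF Wf_int])
  show "(\<lambda>x::'r \<times> 't \<Rightarrow> complex. G1f (Apx x) i s) \<in> borel_measurable channel_dist"
    using s by (intro G1f_meas) auto
  show "AE x in channel_dist. norm (G1f (Apx x) i s) \<le> norm (Wf x)"
  proof (rule AE_I2)
    fix x
    show "norm (G1f (Apx x) i s) \<le> norm (Wf x)"
      using G1_W[of s x i] Wf_nonneg[of x] s by simp
  qed
qed

lemma derI_int:
  assumes s: "s \<in> {0..<1}"
  shows "((\<lambda>t. \<Sum>i\<in>UNIV. integral\<^sup>L channel_dist (\<lambda>x::'r::finite \<times> 't::finite \<Rightarrow> complex. Gf (Apx x) i t))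
     has_real_derivative (\<Sum>i\<in>UNIV. integral\<^sup>L channel_dist (\<lambda>x::'r \<times> 't \<Rightarrow> complex. G1f (Apx x) i s))) (at s within {0..<1})"
proof (rule DERIV_sum)
  fix i :: 't
  show "((\<lambda>t. integral\<^sup>L channel_dist (\<lambda>x::'r \<times> 't \<Rightarrow> complex. Gf (Apx x) i t)) has_real_derivative
      integral\<^sup>L channel_dist (\<lambda>x::'r \<times> 't \<Rightarrow> complex. G1f (Apx x) i s)) (at s within {0..<1})"
  proof (rule deriv_int[where w=Wf])
    show "convex {0..<1::real}" by simp
    show "\<And>x t. x \<in> space channel_dist \<Longrightarrow> t \<in> {0..<1} \<Longrightarrow>
        ((\<lambda>t. Gf (Apx x) i t) has_real_derivative G1f (Apx x) i t) (at t within {0..<1})"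
      by (rule derG_S)
    show "\<And>x t. x \<in> space channel_dist \<Longrightarrow> t \<in> {0..<1} \<Longrightarrow> \<bar>G1f (Apx x) i t\<bar> \<le> Wf x"
      using G1_W by fastforce
    show "integrable channel_dist Wf" by (rule Wf_int)
    show "\<And>t. t \<in> {0..<1} \<Longrightarrow> integrable channel_dist (\<lambda>x. Gf (Apx x) i t)" by (rule int_Gf)
    show "\<And>t. t \<in> {0..<1} \<Longrightarrow> (\<lambda>x. G1f (Apx x) i t) \<in> borel_measurable channel_dist"
      by (rule G1f_meas) auto
  qed (rule s)
qed

lemma derI1_int:
  shows "((\<lambda>t. \<Sum>i\<in>UNIV. integral\<^sup>L channel_dist (\<lambda>x::'r::finite \<times> 't::finite \<Rightarrow> complex. G1f (Apx x) i t))
     has_real_derivative (\<Sum>i\<in>UNIV. integral\<^sup>L channel_dist (\<lambda>x::'r \<times> 't \<Rightarrow> complex. G2f (Apx x) i 0))) (at 0 within {0..<1})"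
proof (rule DERIV_sum)
  fix i :: 't
  show "((\<lambda>t. integral\<^sup>L channel_dist (\<lambda>x::'r \<times> 't \<Rightarrow> complex. G1f (Apx x) i t)) has_real_derivative
      integral\<^sup>L channel_dist (\<lambda>x::'r \<times> 't \<Rightarrow> complex. G2f (Apx x) i 0)) (at 0 within {0..<1})"
  proof (rule deriv_int[where w=Wf])
    show "convex {0..<1::real}" by simp
    show "\<And>x t. x \<in> space channel_dist \<Longrightarrow> t \<in> {0..<1} \<Longrightarrow>
        ((\<lambda>t. G1f (Apx x) i t) has_real_derivative G2f (Apx x) i t) (at t within {0..<1})"
      by (rule derG1_S)
    show "\<And>x t. x \<in> space channel_dist \<Longrightarrow> t \<in> {0..<1} \<Longrightarrow> \<bar>G2f (Apx x) i t\<bar> \<le> Wf x"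
      using G2_W by fastforce
    show "integrable channel_dist Wf" by (rule Wf_int)
    show "\<And>t. t \<in> {0..<1} \<Longrightarrow> integrable channel_dist (\<lambda>x. G1f (Apx x) i t)" by (rule int_G1f)
    show "\<And>t. t \<in> {0..<1} \<Longrightarrow> (\<lambda>x. G2f (Apx x) i t) \<in> borel_measurable channel_dist"
      by (rule G2f_meas) auto
  qed simp
qed


theorem proposition3:
  "\<exists>D1 D2 I' \<epsilon>. \<epsilon> > 0 \<and>
     (\<forall>s\<in>{0..<\<epsilon>}. (I_mmse TYPE('r::finite \<times> 't::finite) has_real_derivative I' s) (at s within {0..})) \<and>
     I' 0 = D1 \<and>
     (I' has_real_derivative D2) (at 0 within {0..}) \<and>
     D2 \<noteq> 0 \<and>
     - 2 * D1\<^sup>2 * ln 2 / D2 =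
       2 * real CARD('r) * real CARD('t) / (2 * real CARD('t) + real CARD('r) - 1)"
proof -
  define I' where "I' t = (\<Sum>i\<in>UNIV. integral\<^sup>L channel_dist (\<lambda>x::'r \<times> 't \<Rightarrow> complex. G1f (Apx x) i t))" for t
  define D2 where "D2 = (\<Sum>i\<in>UNIV. integral\<^sup>L channel_dist (\<lambda>x::'r \<times> 't \<Rightarrow> complex. G2f (Apx x) i 0))"
  define N where "N = real CARD('r)"
  define T where "T = real CARD('t)"
  have N1: "1 \<le> N" and T1: "1 \<le> T" by (simp_all add: N_def T_def)
  have ln2: "0 < ln (2::real)" by simp
  have der1: "(I_mmse TYPE('r \<times> 't) has_real_derivative I' s) (at s within {0..})" if s: "s \<in> {0..<1}" for s
  proof -
    have "(I_mmse TYPE('r \<times> 't) has_real_derivative I' s) (at s within {0..<1})"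
      unfolding I'_def
    proof (rule has_field_derivative_transform_within[OF derI_int[OF s] zero_less_one s])
      fix t :: real assume "t \<in> {0..<1}"
      then show "(\<Sum>i\<in>UNIV. integral\<^sup>L channel_dist (\<lambda>x::'r \<times> 't \<Rightarrow> complex. Gf (Apx x) i t)) = I_mmse TYPE('r \<times> 't) t"
        using I_mmse_eq[of t, where 'r='r and 't='t] by simp
    qed
    then show ?thesis using at_01[of s] s by simp
  qed
  have der2: "(I' has_real_derivative D2) (at 0 within {0..})"
    using derI1_int at_01[of 0] unfolding I'_def[abs_def] D2_def by simp
  have D1v: "I' 0 = N / ln 2"
    unfolding I'_def E1 N_def by (simp add: field_simps)
  have D2v: "D2 = - (N * (N + 2 * T - 1)) / (T * ln 2)"
    unfolding D2_def E2 by (simp add: N_def T_def field_simps power2_eq_square)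
  have D2nz: "D2 \<noteq> 0" unfolding D2v using N1 T1 ln2 by simp
  have fin: "- 2 * (I' 0)\<^sup>2 * ln 2 / D2 = 2 * N * T / (2 * T + N - 1)"
  proof -
    have a: "N + 2 * T - 1 > 0" using N1 T1 by simp
    have b: "N > 0" "T > 0" using N1 T1 by auto
    have "- 2 * (N / ln 2)\<^sup>2 * ln 2 / (- (N * (N + 2 * T - 1)) / (T * ln 2))
        = (2 * N * N / ln 2) * (T * ln 2) / (N * (N + 2 * T - 1))"
      using a b ln2 by (simp add: power2_eq_square divide_simps)
    also have "\<dots> = 2 * N * T / (N + 2 * T - 1)"
      using a b ln2 by (simp add: divide_simps)
    finally show ?thesis unfolding D1v D2v by (simp add: algebra_simps)
  qed
  show ?thesis
    apply (rule exI[of _ "I' 0"], rule exI[of _ D2], rule exI[of _ I'], rule exI[of _ 1])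
    using der1 der2 D2nz fin by (simp add: N_def T_def)
qed


end
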